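(* (Betabar-derivative identity.) Let $F\in R$ be $k$-monic of $Y$-degree $N>0$ with $\mathrm{GCD}(F_Y,F-c)=1$ for all $c\in k$. Then $$\mathrm{int}(F_X,F_Y)=\mathrm{int}(F,F_Y)-N+1+\overline\beta(F),$$ where each term is an integer.
   Context: Let $k$ be an algebraically closed field of characteristic zero, $R=k((X))[Y]$, and $R^{\natural}$ the set of monic irreducible polynomials of positive degree in $Y$ over $k((X))$. Subscripts denote partial derivatives. For $H\in R$ let $n=\deg_Y H$ ($-\infty$ if $H=0$) and $H_0$ the coefficient of $Y^n$ ($0$ if $H=0$); $H$ is $k$-monic if $0\ne H_0\in k$. Write $H=H_0\prod_{j=1}^{\chi(H)}H_j$ with $H_j\in R^{\natural}$ (repetitions allowed). Intersection multiplicity: for nonzero $H,G\in R$ with $M=\deg_YG$, choose an integer $\nu>0$ divisible by all $\deg_Y H_j$ and write $H(X^\nu,Y)=H_0(X^\nu)\prod_{i=1}^n(Y-z_i(X))$, $z_i\in k((X))$; then $\mathrm{int}(H,G)=M\,\mathrm{ord}_XH_0+\frac1\nu\sum_i\mathrm{ord}_XG(X^\nu,z_i(X))$ ($\mathrm{ord}_X0=\infty$). If exactly one of $H,G$ is $0$, $\mathrm{int}(H,G)$ is $0$ if the other lies in $k((X))$ and $\infty$ otherwise; $\mathrm{int}(0,0)=\infty$. $\mathrm{GCD}(H,G)=1$ means $\mathrm{int}(H,G)\ne\infty$. For $\Phi\in R^{\natural}$, $\mathrm{res}(\Phi,G)$ is the unique $\lambda\in k$ with $\mathrm{int}(\Phi,G-\lambda)>0$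 if $\mathrm{int}(\Phi,G)\ge0$, and $\infty$ otherwise. For $\lambda\in k$: $\alpha_\lambda(H,G)=\{j:\mathrm{res}(H_j,G)=\lambda\}$, $\beta_\lambda(H,G)=\sum_{j\in\alpha_\lambda(H,G)}\mathrm{int}(H_j,G-\lambda)$, $\alpha(H,G)=\{\lambda\in k:\alpha_\lambda(H,G)\ne\emptyset\}$, $\beta(H,G)=\sum_{0\ne\lambda\in\alpha(H,G)}\beta_\lambda(H,G)$. The betabar invariant of $F$ is $\overline\beta(F)=\beta(F_Y,F)$. *)

theory Defs
  imports "HOL-Computational_Algebra.Computational_Algebra" "HOL-Library.Extended_Real"
begin

text \<open>R = k((X))[Y] is rendered as the type 'a fls poly (polynomials in Y over
  formal Laurent series in X with coefficients in k = 'a).\<close>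

definition ordX :: "'a::zero fls \<Rightarrow> ereal" where
  "ordX f = (if f = 0 then (\<infinity>::ereal) else ereal (of_int (fls_subdegree f)))"

definition subst_pow :: "nat \<Rightarrow> 'a::field fls poly \<Rightarrow> 'a fls poly" where
  "subst_pow \<nu> H = map_poly (\<lambda>c. fls_compose_power c \<nu>) H"

definition monic_irred :: "'a::field fls poly \<Rightarrow> bool" where
  "monic_irred P \<longleftrightarrow> lead_coeff P = 1 \<and> irreducible P \<and> degree P > 0"

definition intm :: "'a::field fls poly \<Rightarrow> 'a fls poly \<Rightarrow> ereal" where
  "intm H G =
    (if H = 0 \<and> G = 0 then (\<infinity>::ereal)
     else if H = 0 then (if degree G = 0 then 0 else (\<infinity>::ereal))
     else if G = 0 then (if degree H = 0 then 0 else (\<infinity>::ereal))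
     else (SOME v. \<exists>\<nu> zs. \<nu> > 0 \<and>
              (\<forall>P. monic_irred P \<and> P dvd H \<longrightarrow> degree P dvd \<nu>) \<and>
              length zs = degree H \<and>
              subst_pow \<nu> H = smult (fls_compose_power (lead_coeff H) \<nu>) (\<Prod>z\<leftarrow>zs. [:- z, 1:]) \<and>
              v = ereal (real (degree G)) * ordX (lead_coeff H)
                  + ereal (1 / real \<nu>) * (\<Sum>z\<leftarrow>zs. ordX (poly (subst_pow \<nu> G) z))))"

text \<open>Residue res(Phi,G): Some lambda, or None standing for infinity.\<close>
definition res :: "'a::field fls poly \<Rightarrow> 'a fls poly \<Rightarrow> 'a option" where
  "res \<Phi> G = (if intm \<Phi> G \<ge> 0
                then Some (THE l. intm \<Phi> (G - [:fls_const l:]) > 0) else None)"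

definition factors :: "'a::field fls poly \<Rightarrow> 'a fls poly multiset" where
  "factors H = (SOME Hs. (\<forall>P\<in>#Hs. monic_irred P) \<and> H = smult (lead_coeff H) (prod_mset Hs))"

definition alpha_lam :: "'a \<Rightarrow> 'a::field fls poly \<Rightarrow> 'a fls poly \<Rightarrow> 'a fls poly multiset" where
  "alpha_lam l H G = filter_mset (\<lambda>P. res P G = Some l) (factors H)"

definition beta_lam :: "'a \<Rightarrow> 'a::field fls poly \<Rightarrow> 'a fls poly \<Rightarrow> ereal" where
  "beta_lam l H G = sum_mset (image_mset (\<lambda>P. intm P (G - [:fls_const l:])) (alpha_lam l H G))"

definition alpha :: "'a::field fls poly \<Rightarrow> 'a fls poly \<Rightarrow> 'a set" where
  "alpha H G = {l. alpha_lam l H G \<noteq> {#}}"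

definition beta :: "'a::field fls poly \<Rightarrow> 'a fls poly \<Rightarrow> ereal" where
  "beta H G = (\<Sum>l\<in>alpha H G - {0}. beta_lam l H G)"

definition betabar :: "'a::field fls poly \<Rightarrow> ereal" where
  "betabar F = beta (pderiv F) F"

end

theory Submission
  imports Defs
begin

unbundle fps_syntax


locale rhom =
  fixes f :: "'a::idom \<Rightarrow> 'b::idom"
  assumes f_add: "\<And>x y. f (x + y) = f x + f y"
    and f_mult: "\<And>x y. f (x * y) = f x * f y"
    and f_one: "f 1 = 1"
begin

lemma f_zero[simp]: "f 0 = 0"
proof -
  have "f 0 + f 0 = f 0 + 0" using f_add[of 0 0] by simp
  then show ?thesis by (rule add_left_imp_eq)
qed

lemma f_uminus: "f (- x) = - f x"
  proof -
  have "f x + f (- x) = 0" using f_add[of x "-x"] by simp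
  then show ?thesis by (simp add: eq_neg_iff_add_eq_0 add.commute)
qed

lemma f_diff: "f (x - y) = f x - f y"
  using f_add[of x "-y"] f_uminus[of y] by simp

lemma f_of_nat: "f (of_nat n) = of_nat n"
  by (induction n) (simp_all add: f_add f_one)

lemma f_power: "f (x ^ n) = f x ^ n"
  by (induction n) (simp_all add: f_mult f_one)

lemma f_sum: "f (sum g A) = (\<Sum>x\<in>A. f (g x))"
  by (induction A rule: infinite_finite_induct) (simp_all add: f_add)

lemma f_prod: "f (prod g A) = (\<Prod>x\<in>A. f (g x))"
  by (induction A rule: infinite_finite_induct) (simp_all add: f_mult f_one)

lemma f_prod_mset: "f (prod_mset (image_mset g A)) = prod_mset (image_mset (\<lambda>x. f (g x)) A)"
  by (induction A) (simp_all add: f_mult f_one)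

lemma coeff_mp: "coeff (map_poly f p) n = f (coeff p n)"
  by (simp add: coeff_map_poly)

lemma mp_add: "map_poly f (p + q) = map_poly f p + map_poly f q"
  by (rule poly_eqI) (simp add: coeff_mp f_add)

lemma mp_diff: "map_poly f (p - q) = map_poly f p - map_poly f q"
  by (rule poly_eqI) (simp add: coeff_mp f_diff)

lemma mp_uminus: "map_poly f (- p) = - map_poly f p"
  by (rule poly_eqI) (simp add: coeff_mp f_uminus)

lemma mp_smult: "map_poly f (smult c p) = smult (f c) (map_poly f p)"
  by (rule poly_eqI) (simp add: coeff_mp f_mult)

lemma mp_pCons: "map_poly f (pCons c p) = pCons (f c) (map_poly f p)"
  by (simp add: map_poly_pCons)

lemma mp_const: "map_poly f [:c:] = [:f c:]"
  by (simp add: map_poly_pCons)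

lemma mp_one: "map_poly f 1 = 1"
  by (simp add: f_one)

lemma mp_mult: "map_poly f (p * q) = map_poly f p * map_poly f q"
  by (induction p) (simp_all add: mp_pCons mp_add mp_smult)

lemma mp_power: "map_poly f (p ^ n) = map_poly f p ^ n"
  by (induction n) (simp_all add: mp_mult mp_one)

lemma mp_prod_mset: "map_poly f (prod_mset (image_mset g A)) = prod_mset (image_mset (\<lambda>x. map_poly f (g x)) A)"
  by (induction A) (simp_all add: mp_mult mp_one)

lemma mp_prod_mset': "map_poly f (prod_mset A) = prod_mset (image_mset (map_poly f) A)"
  using mp_prod_mset[of "\<lambda>x. x" A] by simp

lemma mp_prod: "map_poly f (prod g A) = (\<Prod>x\<in>A. map_poly f (g x))"
  by (induction A rule: infinite_finite_induct) (simp_all add: mp_mult mp_one)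

lemma mp_linear: "map_poly f [:-z, 1:] = [:- f z, 1:]"
  by (simp add: map_poly_pCons f_uminus f_one)

lemma mp_dvd: "p dvd q \<Longrightarrow> map_poly f p dvd map_poly f q"
  by (auto simp: mp_mult elim!: dvdE)

lemma poly_mp: "poly (map_poly f p) (f x) = f (poly p x)"
  by (induction p) (simp_all add: mp_pCons f_add f_mult)

lemma mp_pcompose: "map_poly f (pcompose p q) = pcompose (map_poly f p) (map_poly f q)"
  by (induction p) (simp_all add: mp_pCons pcompose_pCons mp_add mp_mult mp_const)

lemma mp_pderiv: "map_poly f (pderiv p) = pderiv (map_poly f p)"
  by (rule poly_eqI) (simp add: coeff_mp coeff_pderiv f_mult f_of_nat f_add f_one)

end



lemma cp_rhom: "0 < \<nu> \<Longrightarrow> rhom (\<lambda>c::'a::field fls. fls_compose_power c \<nu>)"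
  by unfold_locales auto

lemma cp_1[simp]: "fls_compose_power f 1 = f"
  by (rule fls_eqI) (simp add: fls_nth_compose_power)

lemma cp_Suc0[simp]: "fls_compose_power f (Suc 0) = f"
  using cp_1 by simp

lemma cp_cp:
  assumes "0 < a" "0 < b"
  shows "fls_compose_power (fls_compose_power f a) b = fls_compose_power f (a*b)"
proof (rule fls_eqI)
  fix n :: int
  show "fls_compose_power (fls_compose_power f a) b $$ n = fls_compose_power f (a * b) $$ n"
  proof (cases "int (a*b) dvd n")
    case True
    then obtain k where k: "n = int (a*b) * k" by (elim dvdE)
    have "n div int b = int a * k" using assms by (simp add: k mult.assoc mult.left_commute)
    then show ?thesis using assms by (simp add: fls_nth_compose_power k mult.assoc mult.left_commute)
  next
    case False
    have "\<not> (int b dvd n \<and> int a dvd n div int b)"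
    proof
      assume H: "int b dvd n \<and> int a dvd n div int b"
      then obtain j where j: "n = int b * j" by (auto elim: dvdE)
      with assms have "n div int b = j" by simp
      with H obtain k where "j = int a * k" by (auto elim: dvdE)
      with j have "n = int (a*b) * k" by (simp add: mult_ac)
      with False show False by simp
    qed
    then show ?thesis using assms False by (auto simp add: fls_nth_compose_power)
  qed
qed

lemma cp_eq0: "0 < \<nu> \<Longrightarrow> fls_compose_power f \<nu> = 0 \<longleftrightarrow> f = 0"
proof
  assume nu: "0 < \<nu>" and c: "fls_compose_power f \<nu> = 0"
  show "f = 0"
  proof (rule fls_eqI)
    fix n
    have "fls_compose_power f \<nu> $$ (int \<nu> * n) = f $$ n"
      using nu by (simp add: fls_nth_compose_power)
    then show "f $$ n = 0 $$ n" using c by simp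
  qed
qed simp

lemma cp_sd:
  assumes "0 < \<nu>"
  shows "fls_subdegree (fls_compose_power f \<nu>) = int \<nu> * fls_subdegree f"
proof (cases "f = 0")
  case False
  show ?thesis
  proof (rule fls_subdegree_eqI)
    show "fls_compose_power f \<nu> $$ (int \<nu> * fls_subdegree f) \<noteq> 0"
      using assms False by (simp add: fls_nth_compose_power)
    fix k assume k: "k < int \<nu> * fls_subdegree f"
    show "fls_compose_power f \<nu> $$ k = 0"
    proof (cases "int \<nu> dvd k")
      case True
      then obtain j where j: "k = int \<nu> * j" by (elim dvdE)
      with k assms have "j < fls_subdegree f" by simp
      then show ?thesis using assms j by (simp add: fls_nth_compose_power fls_eq0_below_subdegree)
    qed (use assms in \<open>simp add: fls_nth_compose_power\<close>)
  qed
qed simp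

lemma cp_nth0: "0 < \<nu> \<Longrightarrow> fls_compose_power f \<nu> $$ 0 = f $$ 0"
  by (simp add: fls_nth_compose_power)

lemma sp_rhom: "0 < \<nu> \<Longrightarrow> rhom (\<lambda>c::'a::field fls. fls_compose_power c \<nu>)"
  by (rule cp_rhom)

lemma coeff_sp: "0 < \<nu> \<Longrightarrow> coeff (subst_pow \<nu> p) n = fls_compose_power (coeff p n) \<nu>"
  by (simp add: subst_pow_def coeff_map_poly)

lemma sp_1[simp]: "subst_pow 1 p = p"
  by (simp add: subst_pow_def)

lemma sp_sp: "0 < a \<Longrightarrow> 0 < b \<Longrightarrow> subst_pow b (subst_pow a p) = subst_pow (a*b) p"
  by (simp add: subst_pow_def map_poly_map_poly o_def cp_cp)

lemma degree_sp: "0 < \<nu> \<Longrightarrow> degree (subst_pow \<nu> p) = degree p"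
  by (simp add: subst_pow_def degree_map_poly cp_eq0)

lemma lead_sp: "0 < \<nu> \<Longrightarrow> lead_coeff (subst_pow \<nu> p) = fls_compose_power (lead_coeff p) \<nu>"
  by (simp add: degree_sp coeff_sp)

lemma sp_eq0: "0 < \<nu> \<Longrightarrow> subst_pow \<nu> p = 0 \<longleftrightarrow> p = 0"
  by (metis cp_eq0 lead_sp leading_coeff_0_iff)

definition sg :: "'a::field \<Rightarrow> 'a fls \<Rightarrow> 'a fls" where
  "sg \<zeta> f = fls_compose_fps f (fps_const \<zeta> * fps_X)"

lemma sg_nth: "\<zeta> \<noteq> 0 \<Longrightarrow> sg \<zeta> f $$ n = f $$ n * \<zeta> powi n"
  by (simp add: sg_def fls_nth_fls_compose_fps_linear)

lemma sg_rhom: "\<zeta> \<noteq> 0 \<Longrightarrow> rhom (sg \<zeta>)"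
  by unfold_locales (simp_all add: sg_def fls_compose_fps_add fls_compose_fps_mult)

lemma sg_sg: "\<zeta> \<noteq> 0 \<Longrightarrow> \<xi> \<noteq> 0 \<Longrightarrow> sg \<xi> (sg \<zeta> f) = sg (\<xi> * \<zeta>) f"
  by (rule fls_eqI) (simp add: sg_nth power_int_mult_distrib mult_ac)

lemma sg_1[simp]: "sg 1 f = f"
  by (rule fls_eqI) (simp add: sg_nth)

lemma sg_cp:
  assumes "\<zeta> ^ \<nu> = 1" "0 < \<nu>"
  shows "sg \<zeta> (fls_compose_power f \<nu>) = fls_compose_power f \<nu>"
proof (rule fls_eqI)
  fix n :: int
  have z: "\<zeta> \<noteq> 0" using assms by (metis power_0_left zero_neq_one not_gr0)
  show "sg \<zeta> (fls_compose_power f \<nu>) $$ n = fls_compose_power f \<nu> $$ n"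
  proof (cases "int \<nu> dvd n")
    case True
    then obtain k where k: "n = int \<nu> * k" by (elim dvdE)
    have "\<zeta> powi n = (\<zeta> powi int \<nu>) powi k" by (simp add: k power_int_mult)
    also have "\<zeta> powi int \<nu> = 1" using assms by (simp add: power_int_of_nat)
    finally show ?thesis using z by (simp add: sg_nth)
  qed (use assms z in \<open>simp add: sg_nth fls_nth_compose_power\<close>)
qed

lemma sg_sd: "\<zeta> \<noteq> 0 \<Longrightarrow> fls_subdegree (sg \<zeta> f) = fls_subdegree f"
  by (simp add: sg_def)

lemma sg_nth0: "\<zeta> \<noteq> 0 \<Longrightarrow> sg \<zeta> f $$ 0 = f $$ 0"
  by (simp add: sg_nth)

lemma sg_const[simp]: "sg \<zeta> (fls_const c) = fls_const c"
  by (simp add: sg_def)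

lemma sg_eq0: "\<zeta> \<noteq> 0 \<Longrightarrow> sg \<zeta> f = 0 \<longleftrightarrow> f = 0"
  by (simp add: sg_def fls_compose_fps_eq_0_iff)



definition ACL :: "'a::field itself \<Rightarrow> bool" where
  "ACL T \<longleftrightarrow> (\<forall>p::'a poly. degree p > 0 \<longrightarrow> (\<exists>x. poly p x = 0))"

lemma ac_factorization:
  fixes p :: "'a::field poly"
  assumes ac: "ACL TYPE('a)" and "p \<noteq> 0"
  shows "\<exists>A. size A = degree p \<and> p = smult (lead_coeff p) (\<Prod>x\<in>#A. [:-x, 1:])"
  using assms(2)
proof (induction "degree p" arbitrary: p rule: less_induct)
  case (less p)
  show ?case
  proof (cases "degree p = 0")
    case True
    thus ?thesis
      by (intro exI[of _ "{#}"]) (auto elim!: degree_eq_zeroE)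
  next
    case False
    then obtain x where x: "poly p x = 0"
      using ac unfolding ACL_def by blast
    hence "[:-x, 1:] dvd p"
      using poly_eq_0_iff_dvd by blast
    then obtain q where p_eq: "p = [:-x, 1:] * q"
      by (elim dvdE)
    have "q \<noteq> 0"
      using less.prems p_eq by auto
    moreover from this have deg: "degree p = Suc (degree q)"
      unfolding p_eq by (subst degree_mult_eq) auto
    ultimately obtain A where A: "size A = degree q" "q = smult (lead_coeff q) (\<Prod>x\<in>#A. [:-x, 1:])"
      using less.hyps[of q] by auto
    have "smult (lead_coeff p) (\<Prod>y\<in>#add_mset x A. [:- y, 1:]) =
          [:- x, 1:] * smult (lead_coeff q) (\<Prod>y\<in>#A. [:- y, 1:])"
      unfolding p_eq lead_coeff_mult by simp
    also note A(2) [symmetric]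
    also note p_eq [symmetric]
    finally show ?thesis using A(1)
      by (intro exI[of _ "add_mset x A"]) (auto simp: deg)
  qed
qed

lemma proots_linprod: "proots (\<Prod>x\<in>#A. [:-x, 1:]) = (A::'a::idom multiset)"
proof (induction A)
  case (add x A)
  have "proots (\<Prod>y\<in>#add_mset x A. [:-y, 1:]) = proots ([:-x, 1:] * (\<Prod>y\<in>#A. [:-y, 1:]))"
    by simp
  also have "\<dots> = proots [:-x, 1:] + proots (\<Prod>y\<in>#A. [:-y, 1:])"
    by (rule proots_mult) (auto simp: prod_mset_zero_iff)
  also have "proots [:-x, 1:] = {#x#}" using proots_linear_factor[of "-x"] by simp
  finally show ?case using add.IH by simp
qed simp

lemma linprod_unique:
  fixes a b :: "'a::idom"
  assumes "smult a (\<Prod>x\<in>#A. [:-x, 1:]) = smult b (\<Prod>x\<in>#B. [:-x, 1:])" "a \<noteq> 0" "b \<noteq> 0"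
  shows "A = B"
  using arg_cong[OF assms(1), of proots] assms(2,3) by (simp add: proots_linprod)

lemma unity_many:
  fixes \<nu> :: nat
  assumes ac: "ACL TYPE('a::field_char_0)" and nu: "0 < \<nu>"
  shows "\<nu> \<le> card {x::'a. x ^ \<nu> = 1}"
proof -
  define p :: "'a poly" where "p = monom 1 \<nu> + [:-1:]"
  have polyp: "poly p x = x ^ \<nu> - 1" for x by (simp add: p_def poly_monom)
  have degp: "degree p = \<nu>" unfolding p_def using nu
    by (subst degree_add_eq_left) (simp_all add: degree_monom_eq)
  have c1: "coeff [:-1::'a:] \<nu> = 0" using nu by (cases \<nu>) auto
  have lp: "lead_coeff p = 1" unfolding p_def using nu c1
    by (subst degree_add_eq_left) (simp_all add: degree_monom_eq)
  have p0: "p \<noteq> 0" using degp nu by auto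
  obtain A where A: "size A = degree p" "p = smult (lead_coeff p) (\<Prod>x\<in>#A. [:-x, 1:])"
    using ac_factorization[OF ac p0] by blast
  have pA: "proots p = A" using A(2) lp by (metis proots_linprod smult_1_left)
  have dp: "pderiv p = monom (of_nat \<nu>) (\<nu> - 1)" by (simp add: p_def pderiv_add pderiv_monom)
  have sqf: "rsquarefree p"
    unfolding rsquarefree_roots
  proof (intro allI notI)
    fix a assume H: "poly p a = 0 \<and> poly (pderiv p) a = 0"
    then have "a ^ \<nu> = 1" by (simp add: polyp)
    then have "a \<noteq> 0" using nu by (metis power_0_left zero_neq_one not_gr0)
    then show False using H nu by (simp add: dp poly_monom)
  qed
  have cnt: "count A x \<le> 1" for x
    using sqf p0 by (simp add: pA[symmetric] rsquarefree_def) (metis le_refl le_SucI le0)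
  have "A = mset_set (set_mset A)"
    by (rule multiset_eqI) (metis cnt count_mset_set(1,3) finite_set_mset le_Suc_eq le_zero_eq count_eq_zero_iff One_nat_def)
  then have "size A = card (set_mset A)" by (metis size_mset_set)
  moreover have "set_mset A = {x. x ^ \<nu> = 1}"
    using p0 by (simp add: pA[symmetric] polyp)
  ultimately show ?thesis using A(1) degp by simp
qed

lemma unity_witness:
  fixes \<nu> :: nat and n :: int
  assumes ac: "ACL TYPE('a::field_char_0)" and nu: "0 < \<nu>" and nd: "\<not> int \<nu> dvd n"
  shows "\<exists>\<zeta>::'a. \<zeta> ^ \<nu> = 1 \<and> \<zeta> powi n \<noteq> 1"
proof (rule ccontr)
  assume H: "\<not> ?thesis"
  define r where "r = nat (n mod int \<nu>)"
  have m: "0 \<le> n mod int \<nu>" "n mod int \<nu> < int \<nu>" "n mod int \<nu> \<noteq> 0"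
    using nu nd by (simp_all add: dvd_eq_mod_eq_0)
  have r0: "0 < r" "r < \<nu>" using m by (simp_all add: r_def)
  have "\<zeta> ^ r = 1" if z: "\<zeta> ^ \<nu> = 1" for \<zeta> :: 'a
  proof -
    have zn: "\<zeta> \<noteq> 0" using z nu by (metis power_0_left zero_neq_one not_gr0)
    have "n = int \<nu> * (n div int \<nu>) + int r" using nu by (simp add: r_def)
    then have "\<zeta> powi n = (\<zeta> powi int \<nu>) powi (n div int \<nu>) * \<zeta> powi int r"
      using zn by (metis power_int_add power_int_mult)
    also have "\<dots> = \<zeta> ^ r" using z by (simp add: power_int_of_nat)
    finally show ?thesis using H z by auto
  qed
  then have sub: "{x::'a. x ^ \<nu> = 1} \<subseteq> {x. poly (monom 1 r + [:-1:]) x = 0}"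
    by (auto simp: poly_monom)
  have q1: "degree (monom (1::'a) r + [:-1:]) = r"
    using r0 by (subst degree_add_eq_left) (simp_all add: degree_monom_eq)
  then have q0: "(monom (1::'a) r + [:-1:]) \<noteq> 0" "degree (monom (1::'a) r + [:-1:]) = r"
    using r0 by auto
  have "card {x::'a. x ^ \<nu> = 1} \<le> card {x. poly (monom (1::'a) r + [:-1:]) x = 0}"
    by (rule card_mono[OF poly_roots_finite[OF q0(1)] sub])
  also have "\<dots> \<le> r" using card_poly_roots_bound[OF q0(1)] q0(2) by simp
  finally show False using unity_many[OF ac nu] r0 by simp
qed

definition unsub :: "nat \<Rightarrow> 'a::field fls \<Rightarrow> 'a fls" where
  "unsub \<nu> f = Abs_fls (\<lambda>m. f $$ (int \<nu> * m))"

lemma unsub_nth: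
  assumes "0 < \<nu>"
  shows "unsub \<nu> f $$ m = f $$ (int \<nu> * m)"
proof -
  obtain N where N: "\<forall>k<N. f $$ k = 0" by (elim fls_nth_vanishes_belowE)
  have "{n::nat. \<not> f $$ (int \<nu> * - int n) = 0} \<subseteq> {..nat (\<bar>N\<bar>)}"
  proof
    fix n assume "n \<in> {n::nat. \<not> f $$ (int \<nu> * - int n) = 0}"
    then have "\<not> int \<nu> * - int n < N" using N by auto
    moreover have "1 * int n \<le> int \<nu> * int n" by (rule mult_right_mono) (use assms in auto)
    ultimately have "int n \<le> \<bar>N\<bar>" by linarith
    then show "n \<in> {..nat \<bar>N\<bar>}" by auto
  qed
  then have "finite {n::nat. \<not> f $$ (int \<nu> * - int n) = 0}" by (rule finite_subset) auto
  then have "\<forall>\<^sub>\<infinity>n. f $$ (int \<nu> * - int n) = 0"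
    by (simp add: eventually_cofinite)
  then show ?thesis unfolding unsub_def by (subst nth_Abs_fls) auto
qed

lemma inv_imp_cp:
  fixes f :: "'a::field_char_0 fls"
  assumes ac: "ACL TYPE('a)" and nu: "0 < \<nu>" and inv: "\<And>\<zeta>. \<zeta> ^ \<nu> = 1 \<Longrightarrow> sg \<zeta> f = f"
  shows "fls_compose_power (unsub \<nu> f) \<nu> = f"
proof (rule fls_eqI)
  fix n :: int
  show "fls_compose_power (unsub \<nu> f) \<nu> $$ n = f $$ n"
  proof (cases "int \<nu> dvd n")
    case True
    then show ?thesis using nu by (simp add: fls_nth_compose_power unsub_nth)
  next
    case False
    obtain \<zeta> :: 'a where z: "\<zeta> ^ \<nu> = 1" "\<zeta> powi n \<noteq> 1"
      using unity_witness[OF ac nu False] by blast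
    have zn: "\<zeta> \<noteq> 0" using z nu by (metis power_0_left zero_neq_one not_gr0)
    have "f $$ n * \<zeta> powi n = f $$ n" using inv[OF z(1)] sg_nth[OF zn, of f n] by simp
    then have "f $$ n = 0" using z(2)
      by (metis mult.right_neutral mult_left_cancel)
    then show ?thesis using nu False by (simp add: fls_nth_compose_power)
  qed
qed

lemma inv_sd_dvd:
  fixes f :: "'a::field_char_0 fls"
  assumes ac: "ACL TYPE('a)" and nu: "0 < \<nu>" and inv: "\<And>\<zeta>. \<zeta> ^ \<nu> = 1 \<Longrightarrow> sg \<zeta> f = f"
  shows "int \<nu> dvd fls_subdegree f"
  using cp_sd[OF nu, of "unsub \<nu> f"] inv_imp_cp[OF ac nu inv] by simp



definition LL :: "'a::zero fps poly \<Rightarrow> nat \<Rightarrow> 'a poly" where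
  "LL A k = map_poly (\<lambda>c. c $ k) A"

lemma coeff_LL: "coeff (LL A k) d = coeff A d $ k"
  by (simp add: LL_def coeff_map_poly)

lemma LL_mult: "LL (A * B :: 'a::comm_ring_1 fps poly) k = (\<Sum>i\<le>k. LL A i * LL B (k - i))"
proof (rule poly_eqI)
  fix d
  have "coeff (LL (A * B) k) d = (\<Sum>a\<le>d. \<Sum>i\<le>k. coeff A a $ i * coeff B (d - a) $ (k - i))"
    by (simp add: coeff_LL coeff_mult fps_sum_nth fps_mult_nth atLeast0AtMost)
  also have "\<dots> = (\<Sum>i\<le>k. \<Sum>a\<le>d. coeff A a $ i * coeff B (d - a) $ (k - i))"
    by (rule sum.swap)
  also have "\<dots> = coeff (\<Sum>i\<le>k. LL A i * LL B (k - i)) d"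
    by (simp add: coeff_sum coeff_mult coeff_LL)
  finally show "coeff (LL (A * B) k) d = coeff (\<Sum>i\<le>k. LL A i * LL B (k - i)) d" .
qed

lemma LL_ext: "(\<And>k. LL A k = LL B k) \<Longrightarrow> A = B"
proof (rule poly_eqI)
  fix d assume H: "\<And>k. LL A k = LL B k"
  show "coeff A d = coeff B d"
  proof (rule fps_ext)
    fix k show "coeff A d $ k = coeff B d $ k"
      using arg_cong[OF H[of k], of "\<lambda>p. coeff p d"] by (simp add: coeff_LL)
  qed
qed

definition mkpoly :: "(nat \<Rightarrow> 'a::comm_monoid_add poly) \<Rightarrow> nat \<Rightarrow> 'a fps poly" where
  "mkpoly F D = (\<Sum>d\<le>D. monom (Abs_fps (\<lambda>k. coeff (F k) d)) d)"

lemma coeff_mkpoly: "coeff (mkpoly F D) j = (if j \<le> D then Abs_fps (\<lambda>k. coeff (F k) j) else 0)"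
  by (simp add: mkpoly_def coeff_sum coeff_monom)

lemma LL_mkpoly:
  assumes "\<And>k d. D < d \<Longrightarrow> coeff (F k) d = (0::'a::comm_monoid_add)"
  shows "LL (mkpoly F D) k = F k"
  by (rule poly_eqI) (auto simp: coeff_LL coeff_mkpoly assms)

definition lowdeg :: "nat \<Rightarrow> 'a::zero poly \<Rightarrow> bool" where
  "lowdeg m X \<longleftrightarrow> (\<forall>d\<ge>m. coeff X d = 0)"

lemma lowdeg_iff: "lowdeg m X \<longleftrightarrow> X = 0 \<or> degree X < m"
proof
  assume H: "lowdeg m X"
  show "X = 0 \<or> degree X < m"
  proof (rule ccontr)
    assume "\<not> (X = 0 \<or> degree X < m)"
    then have "X \<noteq> 0" "m \<le> degree X" by auto
    then show False using H unfolding lowdeg_def by auto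
  qed
next
  assume "X = 0 \<or> degree X < m"
  then show "lowdeg m X" unfolding lowdeg_def by (auto intro: coeff_eq_0)
qed

lemma lowdeg_mult:
  fixes X Y :: "'a::idom poly"
  assumes "degree X \<le> a" "lowdeg b Y"
  shows "lowdeg (a + b) (X * Y)"
  using assms unfolding lowdeg_iff
  by (cases "X = 0"; cases "Y = 0") (auto simp: degree_mult_eq)

lemma lowdeg_mult2:
  fixes X Y :: "'a::idom poly"
  assumes "lowdeg a X" "lowdeg b Y"
  shows "lowdeg (a + b) (X * Y)"
  using assms unfolding lowdeg_iff
  by (cases "X = 0"; cases "Y = 0") (auto simp: degree_mult_eq)

lemma lowdeg_diff: "lowdeg m X \<Longrightarrow> lowdeg m Y \<Longrightarrow> lowdeg m (X - Y)"
  by (simp add: lowdeg_def)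

lemma lowdeg_add: "lowdeg m X \<Longrightarrow> lowdeg m Y \<Longrightarrow> lowdeg m (X + Y)"
  by (simp add: lowdeg_def)

lemma lowdeg_sum: "(\<And>i. i \<in> A \<Longrightarrow> lowdeg m (X i)) \<Longrightarrow> lowdeg m (sum X A)"
  by (induction A rule: infinite_finite_induct) (auto simp: lowdeg_add lowdeg_def)

lemma lowdeg_mono: "lowdeg m X \<Longrightarrow> m \<le> m' \<Longrightarrow> lowdeg m' X"
  by (simp add: lowdeg_def)

function hs :: "'a::field fps poly \<Rightarrow> 'a poly \<Rightarrow> 'a poly \<Rightarrow> 'a poly \<Rightarrow> nat \<Rightarrow> 'a poly \<times> 'a poly" where
  "hs P g h t k = (if k = 0 then (g, h) else
    (let r = LL P k - (\<Sum>i\<in>{1..<k}. fst (hs P g h t i) * snd (hs P g h t (k - i)));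
         G = (t * r) mod g
     in (G, (r - h * G) div g)))"
  by pat_completeness auto
termination by (relation "measure (\<lambda>(P, g, h, t, k). k)") auto

declare hs.simps[simp del]

lemma hensel:
  fixes P :: "'a::field fps poly" and g h :: "'a poly"
  assumes monP: "lead_coeff P = 1" and red: "LL P 0 = g * h"
    and mg: "lead_coeff g = 1" and mh: "lead_coeff h = 1" and st: "s * g + t * h = 1"
  shows "\<exists>G H. P = G * H \<and> lead_coeff G = 1 \<and> degree G = degree g"
proof -
  define n where "n = degree P"
  have g0: "g \<noteq> 0" and h0: "h \<noteq> 0" using mg mh by auto
  have degLP0: "degree (LL P 0) = n"
  proof (rule antisym)
    show "degree (LL P 0) \<le> n"
      by (rule degree_le) (simp add: coeff_LL n_def coeff_eq_0)
    show "n \<le> degree (LL P 0)"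
      by (rule le_degree) (simp add: coeff_LL n_def monP)
  qed
  have ndeg: "n = degree g + degree h"
    using degLP0 red g0 h0 by (simp add: degree_mult_eq)
  have LPk: "lowdeg n (LL P k)" if "k > 0" for k
    unfolding lowdeg_def
  proof (intro allI impI)
    fix d assume "n \<le> d"
    then show "coeff (LL P k) d = 0"
    proof (cases "d = n")
      case True then show ?thesis using monP that by (simp add: coeff_LL n_def)
    qed (simp add: coeff_LL n_def coeff_eq_0)
  qed
  define Gk where "Gk k = fst (hs P g h t k)" for k
  define Hk where "Hk k = snd (hs P g h t k)" for k
  define rk where "rk k = LL P k - (\<Sum>i\<in>{1..<k}. Gk i * Hk (k - i))" for k
  have Gk0: "Gk 0 = g" and Hk0: "Hk 0 = h"
    by (simp_all add: Gk_def Hk_def hs.simps)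
  have hsk: "hs P g h t k = ((t * rk k) mod g, (rk k - h * ((t * rk k) mod g)) div g)" if "k > 0" for k
    using that unfolding Gk_def Hk_def rk_def by (subst hs.simps) (simp add: Let_def)
  have Gks: "Gk k = (t * rk k) mod g" if "k > 0" for k
    using hsk[OF that] by (simp add: Gk_def)
  have Hks: "Hk k = (rk k - h * Gk k) div g" if "k > 0" for k
    using hsk[OF that] by (simp add: Hk_def Gks[OF that])
  have solve: "g * Hk k + h * Gk k = rk k" if "k > 0" for k
  proof -
    define r where "r = rk k"
    define G where "G = (t * r) mod g"
    have "t * r = (t * r div g) * g + G" by (simp add: G_def)
    have "r = (s * g + t * h) * r" using st by simp
    also have "\<dots> = g * (s * r) + h * (t * r)" by (simp add: algebra_simps)
    also have "t * r = (t * r div g) * g + G" by (simp add: G_def)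
    finally have "r - h * G = g * (s * r + h * (t * r div g))" by (simp add: algebra_simps)
    note eq = this
    then have "(r - h * G) div g = s * r + h * (t * r div g)" using g0 by simp
    moreover have GG: "Gk k = G" by (simp add: Gks[OF that] G_def r_def)
    moreover have "Hk k = (r - h * G) div g" by (simp add: Hks[OF that] GG r_def)
    ultimately have "g * Hk k + h * Gk k = (r - h * G) + h * G" using eq by simp
    then show ?thesis by (simp add: r_def)
  qed
  have bounds: "lowdeg (degree g) (Gk k) \<and> lowdeg (degree h) (Hk k)" if "k > 0" for k
    using that
  proof (induction k rule: less_induct)
    case (less k)
    have "lowdeg n (Gk i * Hk (k - i))" if "i \<in> {1..<k}" for i
      using lowdeg_mult2[of "degree g" "Gk i" "degree h" "Hk (k - i)"] less.IH[of i] less.IH[of "k - i"] that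
      by (auto simp: ndeg)
    then have "lowdeg n (\<Sum>i\<in>{1..<k}. Gk i * Hk (k - i))" by (rule lowdeg_sum)
    then have rl: "lowdeg n (rk k)" unfolding rk_def by (intro lowdeg_diff LPk less.prems)
    have Gl: "lowdeg (degree g) (Gk k)"
      using degree_mod_less[OF g0, of "t * rk k"] by (simp add: Gks less.prems lowdeg_iff)
    have "lowdeg (degree h + degree g) (h * Gk k)" by (rule lowdeg_mult[OF order.refl Gl])
    then have "lowdeg n (rk k - h * Gk k)" using rl by (intro lowdeg_diff) (simp_all add: ndeg add.commute)
    moreover have "rk k - h * Gk k = g * Hk k" using solve[OF less.prems] by (simp add: algebra_simps)
    ultimately have "lowdeg n (g * Hk k)" by simp
    then have "lowdeg (degree h) (Hk k)"
      using g0 by (cases "Hk k = 0") (auto simp: lowdeg_iff degree_mult_eq ndeg)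
    then show ?case using Gl by simp
  qed
  have bG: "coeff (Gk k) d = 0" if "degree g < d" for k d
  proof (cases "k = 0")
    case True then show ?thesis using that by (simp add: Gk0 coeff_eq_0)
  next
    case False then show ?thesis using bounds[of k] that by (simp add: lowdeg_def)
  qed
  have bH: "coeff (Hk k) d = 0" if "degree h < d" for k d
  proof (cases "k = 0")
    case True then show ?thesis using that by (simp add: Hk0 coeff_eq_0)
  next
    case False then show ?thesis using bounds[of k] that by (simp add: lowdeg_def)
  qed
  define G where "G = mkpoly Gk (degree g)"
  define H where "H = mkpoly Hk (degree h)"
  have LG: "LL G k = Gk k" for k unfolding G_def by (rule LL_mkpoly) (rule bG)
  have LH: "LL H k = Hk k" for k unfolding H_def by (rule LL_mkpoly) (rule bH)
  have "P = G * H"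
  proof (rule LL_ext)
    fix k
    show "LL P k = LL (G * H) k"
    proof (cases "k = 0")
      case True then show ?thesis by (simp add: LL_mult LG LH Gk0 Hk0 red)
    next
      case False
      have split: "{..k} = insert 0 (insert k {1..<k})" using False by auto
      have "LL (G * H) k = (\<Sum>i\<le>k. Gk i * Hk (k - i))" by (simp add: LL_mult LG LH)
      also have "\<dots> = g * Hk k + (Gk k * h + (\<Sum>i\<in>{1..<k}. Gk i * Hk (k - i)))"
        using False by (simp add: split Gk0 Hk0)
      also have "\<dots> = LL P k" using solve[of k] False by (simp add: rk_def algebra_simps)
      finally show ?thesis by simp
    qed
  qed
  moreover have cG: "coeff G d = Abs_fps (\<lambda>k. coeff (Gk k) d)" if "d \<le> degree g" for d
    using that by (simp add: G_def coeff_mkpoly)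
  have cGd: "coeff G (degree g) = 1"
  proof -
    have "Abs_fps (\<lambda>k. coeff (Gk k) (degree g)) = 1"
    proof (rule fps_ext)
      fix k show "Abs_fps (\<lambda>k. coeff (Gk k) (degree g)) $ k = 1 $ k"
        using bounds[of k] mg by (cases "k = 0") (auto simp: Gk0 lowdeg_def)
    qed
    then show ?thesis using cG by simp
  qed
  have dG: "degree G = degree g"
  proof (rule antisym)
    show "degree G \<le> degree g" by (rule degree_le) (simp add: G_def coeff_mkpoly)
    show "degree g \<le> degree G" by (rule le_degree) (simp add: cGd)
  qed
  ultimately show ?thesis using cGd by (intro exI[of _ G] exI[of _ H]) simp
qed



lemma poly_bezout:
  fixes f g :: "'a::field poly"
  assumes "f \<noteq> 0"
  shows "\<exists>a b. a*f + b*g \<noteq> 0 \<and> (a*f + b*g) dvd f \<and> (a*f + b*g) dvd g"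
proof -
  define S where "S = {n. \<exists>a b. a*f + b*g \<noteq> 0 \<and> degree (a*f+b*g) = n}"
  have "degree f \<in> S" unfolding S_def using assms by (intro CollectI exI[of _ 1] exI[of _ 0]) simp
  define n where "n = (LEAST n. n \<in> S)"
  have "n \<in> S" unfolding n_def by (rule LeastI) fact
  then obtain a b where d: "a*f + b*g \<noteq> 0" "degree (a*f+b*g) = n" unfolding S_def by blast
  define d where "d = a*f + b*g"
  have dv: "d dvd x" if x: "x = a'*f + b'*g" for x a' b'
  proof (rule ccontr)
    assume nd: "\<not> d dvd x"
    then have m0: "x mod d \<noteq> 0" by (simp add: mod_eq_0_iff_dvd)
    have "x mod d = x - x div d * d" by (simp add: minus_div_mult_eq_mod)
    also have "\<dots> = (a' - x div d * a) * f + (b' - x div d * b) * g"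
      by (simp add: x d_def algebra_simps)
    finally have "(a' - x div d * a) * f + (b' - x div d * b) * g \<noteq> 0 \<and>
       degree ((a' - x div d * a) * f + (b' - x div d * b) * g) = degree (x mod d)" using m0 by simp
    then have "degree (x mod d) \<in> S" unfolding S_def by blast
    then have "n \<le> degree (x mod d)" unfolding n_def by (rule Least_le)
    moreover have "degree (x mod d) < degree d" using degree_mod_less'[of d x] d m0 by (simp add: d_def)
    ultimately show False using d by (simp add: d_def)
  qed
  have "d dvd f" by (rule dv[of f 1 0]) simp
  moreover have "d dvd g" by (rule dv[of g 0 1]) simp
  ultimately show ?thesis using d by (auto simp: d_def)
qed

lemma poly_bezout_one:
  fixes f g :: "'a::field poly"
  assumes "f \<noteq> 0" and nc: "\<And>d. d dvd f \<Longrightarrow> d dvd g \<Longrightarrow> d \<noteq> 0 \<Longrightarrow> degree d = 0"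
  shows "\<exists>s t. s*f + t*g = 1"
proof -
  obtain a b where ab: "a*f + b*g \<noteq> 0" "(a*f + b*g) dvd f" "(a*f + b*g) dvd g"
    using poly_bezout[OF assms(1)] by blast
  define d where "d = a*f + b*g"
  have "degree d = 0" using nc ab by (simp add: d_def)
  then obtain c where c: "d = [:c:]" by (elim degree_eq_zeroE)
  have "c \<noteq> 0" using ab c by (simp add: d_def)
  have "smult (inverse c) a * f + smult (inverse c) b * g = smult (inverse c) d"
    by (simp add: d_def smult_add_right)
  also have "\<dots> = 1" using c \<open>c \<noteq> 0\<close> by (simp add: one_pCons)
  finally show ?thesis by blast
qed

lemma monic_irred_factorization:
  fixes H :: "'a::field poly"
  assumes "H \<noteq> 0"
  shows "\<exists>Hs. (\<forall>P\<in>#Hs. lead_coeff P = 1 \<and> irreducible P \<and> degree P > 0) \<and>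
             H = smult (lead_coeff H) (prod_mset Hs)"
  using assms
proof (induction "degree H" arbitrary: H rule: less_induct)
  case (less H)
  show ?case
  proof (cases "degree H = 0")
    case True
    then show ?thesis by (intro exI[of _ "{#}"]) (auto elim!: degree_eq_zeroE)
  next
    case False
    show ?thesis
    proof (cases "irreducible H")
      case True
      define P where "P = smult (inverse (lead_coeff H)) H"
      have lH: "lead_coeff H \<noteq> 0" using less.prems by simp
      have PH: "P = [:inverse (lead_coeff H):] * H" by (simp add: P_def)
      have u: "is_unit [:inverse (lead_coeff H):]" using lH by (auto simp: is_unit_const_poly_iff dvd_field_iff)
      have "irreducible P" unfolding PH using True u by (simp only: irreducible_mult_unit_left)
      moreover have "lead_coeff P = 1" using lH by (simp add: P_def)
      moreover have "degree P > 0" using False lH by (simp add: P_def)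
      moreover have "H = smult (lead_coeff H) P" using lH by (simp add: P_def)
      ultimately show ?thesis by (intro exI[of _ "{#P#}"]) auto
    next
      case ni: False
      have nu: "\<not> is_unit H" using False by (simp add: is_unit_iff_degree less.prems)
      obtain a b where ab: "H = a * b" "\<not> is_unit a" "\<not> is_unit b"
        using ni nu less.prems unfolding irreducible_def by blast
      have a0: "a \<noteq> 0" "b \<noteq> 0" using ab less.prems by auto
      have da: "degree a > 0" "degree b > 0" using ab a0 by (auto simp: is_unit_iff_degree)
      have dH: "degree H = degree a + degree b" using ab a0 by (simp add: degree_mult_eq)
      obtain A where A: "\<forall>P\<in>#A. lead_coeff P = 1 \<and> irreducible P \<and> degree P > 0"
        "a = smult (lead_coeff a) (prod_mset A)"
        using less.hyps[of a] a0 da dH by auto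
      obtain B where B: "\<forall>P\<in>#B. lead_coeff P = 1 \<and> irreducible P \<and> degree P > 0"
        "b = smult (lead_coeff b) (prod_mset B)"
        using less.hyps[of b] a0 da dH by auto
      have "H = smult (lead_coeff H) (prod_mset (A + B))"
        using A(2) B(2) ab(1) by (simp add: lead_coeff_mult) (metis mult_smult_left mult_smult_right smult_smult)
      then show ?thesis using A(1) B(1) by (intro exI[of _ "A + B"]) auto
    qed
  qed
qed

lemma coeff_binom1: "coeff ([:b, 1:] ^ Suc n) n = of_nat (Suc n) * (b :: 'a::comm_ring_1)"
proof (induction n)
  case 0 then show ?case by simp
next
  case (Suc n)
  have gen: "pCons b [:1:] * q = smult b q + pCons 0 q" for q :: "'a poly"
    by (simp add: mult_pCons_left)
  have "[:b, 1:] ^ Suc (Suc n) = [:b, 1:] * [:b, 1:] ^ Suc n" by (rule power_Suc)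
  also have "\<dots> = smult b ([:b, 1:] ^ Suc n) + pCons 0 ([:b, 1:] ^ Suc n)" by (rule gen)
  finally have "[:b, 1:] ^ Suc (Suc n) = smult b ([:b, 1:] ^ Suc n) + pCons 0 ([:b, 1:] ^ Suc n)" .
  then have "coeff ([:b, 1:] ^ Suc (Suc n)) (Suc n) = b * coeff ([:b, 1:] ^ Suc n) (Suc n) + coeff ([:b, 1:] ^ Suc n) n"
    by simp
  also have "coeff ([:b, 1:] ^ Suc n) (Suc n) = 1" by (rule coeff_linear_power)
  finally show ?case using Suc.IH by (simp add: algebra_simps)
qed

lemma pcompose_power_left: "pcompose (p ^ n) q = (pcompose p q) ^ n"
  by (induction n) (simp_all add: pcompose_mult pcompose_1)

lemma coeff_shift:
  fixes p :: "'a::idom poly"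
  assumes "degree p = Suc m"
  shows "coeff (pcompose p [:b, 1:]) m = coeff p m + of_nat (Suc m) * b * lead_coeff p"
proof -
  define c where "c = lead_coeff p"
  define r where "r = p - monom c (Suc m)"
  have pr: "p = monom c (Suc m) + r" by (simp add: r_def)
  have cr: "coeff r m = coeff p m" by (simp add: r_def)
  have dr: "degree r \<le> m"
  proof (rule degree_le, intro allI impI)
    fix i assume "m < i"
    then show "coeff r i = 0" using assms by (cases "i = Suc m") (auto simp: r_def c_def coeff_eq_0)
  qed
  have pm: "pcompose (monom c (Suc m)) [:b, 1:] = smult c ([:b, 1:] ^ Suc m)"
    by (simp add: monom_altdef pcompose_smult pcompose_power_left pcompose_pCons del: power_Suc)
  have "coeff (pcompose r [:b, 1:]) m = coeff r m"
  proof (cases "degree r = m")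
    case True
    have "lead_coeff (pcompose r [:b, 1:]) = lead_coeff r"
      by (subst lead_coeff_comp) simp_all
    moreover have "degree (pcompose r [:b, 1:]) = degree r" by (simp add: degree_pcompose)
    ultimately show ?thesis using True by simp
  next
    case False
    then have "degree r < m" using dr by simp
    moreover have "degree (pcompose r [:b, 1:]) = degree r" by (simp add: degree_pcompose)
    ultimately show ?thesis by (simp add: coeff_eq_0)
  qed
  then show ?thesis
    by (subst pr) (simp only: pcompose_add pm coeff_add coeff_smult coeff_binom1 cr, simp add: c_def algebra_simps)
qed



context
  fixes \<nu> :: nat
  assumes nu: "0 < \<nu>"
begin

interpretation cph: rhom "\<lambda>c::'a::field fls. fls_compose_power c \<nu>"
  by (rule cp_rhom[OF nu])

lemma sp_mult: "subst_pow \<nu> (p * q :: 'a::field fls poly) = subst_pow \<nu> p * subst_pow \<nu> q"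
  unfolding subst_pow_def by (rule cph.mp_mult)
lemma sp_add: "subst_pow \<nu> (p + q :: 'a::field fls poly) = subst_pow \<nu> p + subst_pow \<nu> q"
  unfolding subst_pow_def by (rule cph.mp_add)
lemma sp_diff: "subst_pow \<nu> (p - q :: 'a::field fls poly) = subst_pow \<nu> p - subst_pow \<nu> q"
  unfolding subst_pow_def by (rule cph.mp_diff)
lemma sp_smult: "subst_pow \<nu> (smult c p :: 'a::field fls poly) = smult (fls_compose_power c \<nu>) (subst_pow \<nu> p)"
  unfolding subst_pow_def by (rule cph.mp_smult)
lemma sp_pCons: "subst_pow \<nu> (pCons c p :: 'a::field fls poly) = pCons (fls_compose_power c \<nu>) (subst_pow \<nu> p)"
  unfolding subst_pow_def by (rule cph.mp_pCons)
lemma sp_const: "subst_pow \<nu> [:c::'a::field fls:] = [:fls_compose_power c \<nu>:]"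
  unfolding subst_pow_def by (rule cph.mp_const)
lemma sp_one: "subst_pow \<nu> (1::'a::field fls poly) = 1"
  unfolding subst_pow_def by (rule cph.mp_one)
lemma sp_linear: "subst_pow \<nu> [:-z, 1::'a::field fls:] = [:- fls_compose_power z \<nu>, 1:]"
  unfolding subst_pow_def by (rule cph.mp_linear)
lemma sp_prod_mset: "subst_pow \<nu> (prod_mset (image_mset g A) :: 'a::field fls poly) =
    prod_mset (image_mset (\<lambda>x. subst_pow \<nu> (g x)) A)"
  unfolding subst_pow_def by (rule cph.mp_prod_mset)
lemma sp_prod_mset': "subst_pow \<nu> (prod_mset A :: 'a::field fls poly) = prod_mset (image_mset (subst_pow \<nu>) A)"
  unfolding subst_pow_def by (rule cph.mp_prod_mset')
lemma sp_pcompose: "subst_pow \<nu> (pcompose p q :: 'a::field fls poly) = pcompose (subst_pow \<nu> p) (subst_pow \<nu> q)"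
  unfolding subst_pow_def by (rule cph.mp_pcompose)
lemma sp_pderiv: "subst_pow \<nu> (pderiv p :: 'a::field fls poly) = pderiv (subst_pow \<nu> p)"
  unfolding subst_pow_def by (rule cph.mp_pderiv)
lemma sp_dvd: "p dvd q \<Longrightarrow> subst_pow \<nu> (p :: 'a::field fls poly) dvd subst_pow \<nu> q"
  unfolding subst_pow_def by (rule cph.mp_dvd)
lemma poly_sp: "poly (subst_pow \<nu> p) (fls_compose_power x \<nu>) = fls_compose_power (poly p x :: 'a::field fls) \<nu>"
  unfolding subst_pow_def by (rule cph.poly_mp)

end

lemma fps_to_fls_rhom: "rhom (fps_to_fls :: 'a::field fps \<Rightarrow> 'a fls)"
  by unfold_locales (simp_all add: fls_times_fps_to_fls)

definition spl :: "nat \<Rightarrow> 'a::field fls poly \<Rightarrow> 'a fls multiset \<Rightarrow> bool" where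
  "spl \<nu> H A \<longleftrightarrow> 0 < \<nu> \<and> subst_pow \<nu> H = smult (fls_compose_power (lead_coeff H) \<nu>) (\<Prod>x\<in>#A. [:-x, 1:])"

lemma spl_mult:
  assumes "spl \<nu> H A" "0 < k"
  shows "spl (\<nu> * k) H (image_mset (\<lambda>z. fls_compose_power z k) A)"
proof -
  have nu: "0 < \<nu>" using assms unfolding spl_def by simp
  have "subst_pow (\<nu> * k) H = subst_pow k (subst_pow \<nu> H)" using nu assms(2) by (simp add: sp_sp)
  also have "\<dots> = smult (fls_compose_power (lead_coeff H) (\<nu> * k))
      (\<Prod>x\<in>#image_mset (\<lambda>z. fls_compose_power z k) A. [:-x, 1:])"
    using assms nu unfolding spl_def
    by (simp add: sp_smult sp_prod_mset sp_linear cp_cp image_mset.compositionality o_def)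
  finally show ?thesis using nu assms(2) unfolding spl_def by simp
qed

lemma degree_linprod: "degree (\<Prod>x\<in>#A. [:-x, (1::'a::idom):]) = size A"
proof (induction A)
  case (add x A)
  have "(\<Prod>x\<in>#A. [:-x, (1::'a):]) \<noteq> 0" by (auto simp: prod_mset_zero_iff)
  then have "degree ([:-x, 1:] * (\<Prod>x\<in>#A. [:-x, (1::'a):])) = Suc (size A)"
    using add by (subst degree_mult_eq) auto
  then show ?case by simp
qed simp

lemma spl_size:
  assumes "spl \<nu> H A" "H \<noteq> 0"
  shows "size A = degree H"
proof -
  have nu: "0 < \<nu>" using assms unfolding spl_def by simp
  have "degree (subst_pow \<nu> H) = degree (\<Prod>x\<in>#A. [:-x, (1::'a fls):])"
    using assms cp_eq0[OF nu, of "lead_coeff H"] unfolding spl_def by simp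
  also have "\<dots> = size A"
    by (rule degree_linprod)
  finally show ?thesis using nu by (simp add: degree_sp)
qed



lemma sp_0[simp]: "subst_pow m 0 = 0"
  by (simp add: subst_pow_def)

lemma sp_Suc0[simp]: "subst_pow (Suc 0) p = p"
  by (simp add: subst_pow_def)

lemma coeff_X_power: "coeff ([:0, 1:] ^ n) j = (if j = n then (1::'a::comm_semiring_1) else 0)"
proof -
  have "[:0, 1:] ^ n = (monom 1 n :: 'a poly)" by (simp add: monom_altdef)
  then show ?thesis by (simp add: coeff_monom)
qed

lemma puiseux_root:
  fixes p :: "'a::field_char_0 fls poly"
  assumes ac: "ACL TYPE('a)"
  shows "lead_coeff p = 1 \<Longrightarrow> degree p > 0 \<Longrightarrow> \<exists>m>0. \<exists>z. poly (subst_pow m p) z = 0"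
proof (induction "degree p" arbitrary: p rule: less_induct)
  case (less p)
  define n where "n = degree p"
  obtain n' where n': "n = Suc n'" using less.prems(2) unfolding n_def by (cases "degree p") auto
  define b :: "'a fls" where "b = - coeff p n' / of_nat n"
  define p1 where "p1 = pcompose p [:b, 1:]"
  have dp1: "degree p1 = n" by (simp add: p1_def degree_pcompose n_def)
  have lp1: "lead_coeff p1 = 1" using less.prems(1) by (simp add: p1_def lead_coeff_comp)
  have c1: "coeff p1 n' = 0"
    using coeff_shift[of p n' b] n' n_def less.prems(1) by (simp add: p1_def b_def del: of_nat_Suc)
  have backr: "poly (subst_pow m p) (fls_compose_power b m + z) = 0"
    if m: "0 < m" and z: "poly (subst_pow m p1) z = 0" for m z
  proof -
    have "subst_pow m p1 = pcompose (subst_pow m p) [:fls_compose_power b m, 1:]"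
      using m by (simp add: p1_def sp_pcompose sp_pCons sp_const)
    then show ?thesis using z by (simp add: poly_pcompose)
  qed
  have "\<exists>m>0. \<exists>z. poly (subst_pow m p1) z = 0"
  proof (cases "\<forall>j<n. coeff p1 j = 0")
    case True
    then have "poly p1 0 = 0" using n' by (simp add: poly_0_coeff_0)
    then show ?thesis by (intro exI[of _ 1]) auto
  next
    case False
    define S where "S = {j. j < n \<and> coeff p1 j \<noteq> 0}"
    have finS: "finite S" and neS: "S \<noteq> {}" using False by (auto simp: S_def)
    define q :: nat where "q = fact n"
    have q0: "0 < q" by (simp add: q_def)
    define tt where "tt j = int (q div (n - j)) * fls_subdegree (coeff p1 j)" for j
    have tq: "tt j * int (n - j) = int q * fls_subdegree (coeff p1 j)" if "j < n" for j
    proof -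
      have "(n - j) dvd q" unfolding q_def using that by (intro dvd_fact) auto
      then have "q div (n - j) * (n - j) = q" by simp
      then have "int (q div (n - j)) * int (n - j) = int q" by (metis of_nat_mult)
      then show ?thesis by (simp add: tt_def mult_ac)
    qed
    define pp where "pp = Min (tt ` S)"
    have "pp \<in> tt ` S" unfolding pp_def using finS neS by (intro Min_in) auto
    then obtain j0 where j0: "j0 \<in> S" "tt j0 = pp" by auto
    have ppl: "pp \<le> tt j" if "j \<in> S" for j using finS that by (simp add: pp_def)
    define p2 where "p2 = smult (fls_X_intpow (- pp * int n)) (pcompose (subst_pow q p1) [:0, fls_X_intpow pp:])"
    have cp2: "coeff p2 j = fls_shift (pp * (int n - int j)) (fls_compose_power (coeff p1 j) q)" for j
    proof -
      have "coeff p2 j = fls_X_intpow (- pp * int n) * (fls_X_intpow pp ^ j * fls_compose_power (coeff p1 j) q)"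
        by (simp add: p2_def coeff_pcompose_linear coeff_sp q0)
      also have "\<dots> = fls_shift (pp * (int n - int j)) (fls_compose_power (coeff p1 j) q)"
        by (simp add: fls_X_intpow_power fls_shifted_times_simps algebra_simps)
      finally show ?thesis .
    qed
    have cn: "coeff p2 n = 1" using lp1 dp1 q0 by (simp add: cp2)
    have chigh: "coeff p2 j = 0" if "n < j" for j using that dp1 by (simp add: cp2 coeff_eq_0)
    have cn': "coeff p2 n' = 0" using c1 by (simp add: cp2)
    have sdp2: "0 \<le> fls_subdegree (coeff p2 j)" if nz: "coeff p2 j \<noteq> 0" for j
    proof -
      have c0: "coeff p1 j \<noteq> 0" using nz by (auto simp: cp2)
      then have jn: "j \<le> n" using dp1 le_degree by blast
      have sd: "fls_subdegree (coeff p2 j) = int q * fls_subdegree (coeff p1 j) - pp * (int n - int j)"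
        using c0 q0 by (simp add: cp2 cp_sd cp_eq0)
      show ?thesis
      proof (cases "j = n")
        case True then show ?thesis using sd lp1 dp1 by simp
      next
        case False
        then have "j \<in> S" using jn c0 by (simp add: S_def)
        then have "pp * (int n - int j) \<le> tt j * (int n - int j)" using jn by (intro mult_right_mono ppl) auto
        moreover have "tt j * (int n - int j) = int q * fls_subdegree (coeff p1 j)"
          using tq[of j] False jn by (simp add: of_nat_diff)
        ultimately show ?thesis using sd by linarith
      qed
    qed
    have j0n: "j0 < n" and cj0: "coeff p1 j0 \<noteq> 0" using j0(1) by (auto simp: S_def)
    have nz0: "coeff p2 j0 \<noteq> 0" using cj0 q0 by (simp add: cp2 cp_eq0 fls_shift_eq0_iff)
    have sdj0: "fls_subdegree (coeff p2 j0) = 0"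
      using cj0 q0 tq[OF j0n] j0(2) by (simp add: cp2 cp_sd cp_eq0 of_nat_diff j0n less_imp_le)
    have dp2: "degree p2 = n"
      by (rule antisym[OF degree_le le_degree]) (auto simp: chigh cn)
    define P2 where "P2 = map_poly fls_regpart p2"
    have P2p2: "map_poly fps_to_fls P2 = p2"
    proof (rule poly_eqI)
      fix j show "coeff (map_poly fps_to_fls P2) j = coeff p2 j"
        using sdp2[of j] by (cases "coeff p2 j = 0") (simp_all add: P2_def coeff_map_poly)
    qed
    have degP2: "degree P2 = n"
      using arg_cong[OF P2p2, of degree] dp2 by (simp add: degree_map_poly)
    have lP2: "lead_coeff P2 = 1" using degP2 cn by (simp add: P2_def coeff_map_poly)
    define pbar where "pbar = LL P2 0"
    have cpbar: "coeff pbar j = coeff p2 j $$ 0" for j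
      by (simp add: pbar_def coeff_LL P2_def coeff_map_poly)
    have dpbar: "degree pbar = n"
      by (rule antisym[OF degree_le le_degree]) (auto simp: cpbar chigh cn)
    have pbar0: "pbar \<noteq> 0" using dpbar n' by auto
    obtain r where r: "poly pbar r = 0" using ac dpbar n' unfolding ACL_def by (metis zero_less_Suc)
    define e where "e = order r pbar"
    obtain h0 where h0: "pbar = [:-r, 1:] ^ e * h0" "\<not> [:-r, 1:] dvd h0"
      using order_decomp[OF pbar0, of r] by (auto simp: e_def)
    have e0: "0 < e" using r pbar0 by (simp add: e_def order_gt_0_iff)
    have h00: "h0 \<noteq> 0" using h0 pbar0 by auto
    have lh0: "lead_coeff h0 = 1"
      using arg_cong[OF h0(1), of lead_coeff] dpbar cn by (simp add: lead_coeff_mult lead_coeff_power cpbar)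
    have degsum: "n = e + degree h0"
      using arg_cong[OF h0(1), of degree] dpbar h00 by (simp add: degree_mult_eq degree_linear_power)
    have dh0: "0 < degree h0"
    proof (rule ccontr)
      assume "\<not> 0 < degree h0"
      then have "degree h0 = 0" by simp
      then have "h0 = 1" using lh0 by (metis leading_coeff_0_iff one_poly_eq_simps(1) degree_eq_zeroE lead_coeff_pCons(2) zero_neq_one)
      then have pb: "pbar = [:-r, 1:] ^ Suc n'" using h0(1) degsum n' by simp
      have "coeff pbar n' = of_nat (Suc n') * (- r)" unfolding pb by (rule coeff_binom1)
      moreover have "coeff pbar n' = 0" using cn' by (simp add: cpbar)
      ultimately have "of_nat (Suc n') * (- r) = 0" by simp
      then have "r = 0" by (simp only: mult_eq_0_iff of_nat_eq_0_iff neg_equal_0_iff_equal) simp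
      then have "coeff pbar j0 = 0" using pb j0n n' by (simp add: coeff_X_power del: power_Suc)
      moreover have "coeff pbar j0 \<noteq> 0" using nz0 sdj0 nth_fls_subdegree_nonzero[OF nz0] by (simp add: cpbar)
      ultimately show False by simp
    qed
    have e_lt: "e < n" using degsum dh0 by simp
    obtain s t where st: "s * [:-r, 1:] ^ e + t * h0 = 1"
    proof -
      have "\<exists>s t. s * [:-r, 1:] ^ e + t * h0 = 1"
      proof (rule poly_bezout_one)
        show "[:-r, 1:] ^ e \<noteq> 0" by simp
        fix d assume d: "d dvd [:-r, 1:] ^ e" "d dvd h0" "d \<noteq> 0"
        show "degree d = 0"
        proof (rule ccontr)
          assume "degree d \<noteq> 0"
          then obtain x where x: "poly d x = 0" using ac unfolding ACL_def by auto
          from d(1) obtain k where k: "[:-r, 1:] ^ e = d * k" by (elim dvdE)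
          have "poly ([:-r, 1:] ^ e) x = poly d x * poly k x" by (simp only: k poly_mult)
          then have "poly ([:-r, 1:] ^ e) x = 0" using x by simp
          then have "x = r" by simp
          moreover have "poly h0 x = 0" using d(2) x by (metis dvdE poly_mult mult_zero_left)
          ultimately have "[:-r, 1:] dvd h0" by (simp add: poly_eq_0_iff_dvd)
          then show False using h0(2) by simp
        qed
      qed
      then show ?thesis using that by blast
    qed
    obtain G H where GH: "P2 = G * H" "lead_coeff G = 1" "degree G = degree ([:-r, 1:] ^ e)"
      using hensel[of P2 "[:-r, 1:] ^ e" h0 s t] lP2 h0(1) lh0 st
      by (auto simp: pbar_def lead_coeff_power)
    define G' where "G' = map_poly fps_to_fls G"
    define H' where "H' = map_poly fps_to_fls H"
    have p2GH: "p2 = G' * H'"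
      using P2p2 GH(1) rhom.mp_mult[OF fps_to_fls_rhom, of G H] by (simp add: G'_def H'_def)
    have dG': "degree G' = e" using GH(3) by (simp add: G'_def degree_map_poly degree_linear_power)
    have lG': "lead_coeff G' = 1" using GH(2) dG' GH(3)
      by (simp add: G'_def degree_map_poly coeff_map_poly degree_linear_power)
    obtain m w where mw: "0 < m" "poly (subst_pow m G') w = 0"
      using less.hyps[of G'] dG' e_lt e0 lG' n_def by auto
    have "poly (subst_pow m p2) w = 0" using mw by (simp add: p2GH sp_mult)
    moreover have "subst_pow m p2 = smult (fls_compose_power (fls_X_intpow (- pp * int n)) m)
        (pcompose (subst_pow (q * m) p1) [:0, fls_compose_power (fls_X_intpow pp) m:])"
      using mw(1) q0 by (simp add: p2_def sp_smult sp_pcompose sp_pCons sp_const sp_sp)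
    ultimately have "poly (subst_pow (q * m) p1) (fls_compose_power (fls_X_intpow pp) m * w) = 0"
      using mw(1) by (simp add: poly_pcompose cp_eq0 mult.commute fls_shift_eq0_iff)
    moreover have "0 < q * m" using q0 mw(1) by simp
    ultimately show ?thesis by blast
  qed
  then obtain m z where "0 < m" "poly (subst_pow m p1) z = 0" by blast
  then show ?case using backr by blast
qed



lemma puiseux_split:
  fixes p :: "'a::field_char_0 fls poly"
  assumes ac: "ACL TYPE('a)"
  shows "p \<noteq> 0 \<Longrightarrow> \<exists>\<nu> A. spl \<nu> p A"
proof (induction "degree p" arbitrary: p rule: less_induct)
  case (less p)
  show ?case
  proof (cases "degree p = 0")
    case True
    then obtain c where c: "p = [:c:]" by (elim degree_eq_zeroE)
    show ?thesis
      by (intro exI[of _ 1] exI[of _ "{#}"]) (simp add: spl_def c sp_const)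
  next
    case False
    define l where "l = lead_coeff p"
    have l0: "l \<noteq> 0" using less.prems by (simp add: l_def)
    define p1 where "p1 = smult (inverse l) p"
    have lp1: "lead_coeff p1 = 1" using l0 by (simp add: p1_def l_def)
    have dp1: "degree p1 = degree p" using l0 by (simp add: p1_def)
    obtain m z where mz: "0 < m" "poly (subst_pow m p1) z = 0"
      using puiseux_root[OF ac lp1] dp1 False by auto
    have pp1: "p = smult l p1" using l0 by (simp add: p1_def)
    have "poly (subst_pow m p) z = 0" using mz by (simp add: pp1 sp_smult)
    then have "[:-z, 1:] dvd subst_pow m p" by (simp add: poly_eq_0_iff_dvd)
    then obtain q where q: "subst_pow m p = [:-z, 1:] * q" by (elim dvdE)
    have sp0: "subst_pow m p \<noteq> 0" using mz(1) less.prems by (simp add: sp_eq0)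
    then have q0: "q \<noteq> 0" using q by auto
    have "degree ([:-z, 1:] * q) = degree [:-z, 1:] + degree q" by (rule degree_mult_eq) (use q0 in simp_all)
    then have dq: "degree (subst_pow m p) = Suc (degree q)" using q by simp
    have "lead_coeff (subst_pow m p) = lead_coeff ([:-z, 1:] * q)" by (simp only: q)
    also have "\<dots> = lead_coeff [:-z, 1:] * lead_coeff q" by (rule lead_coeff_mult)
    finally have lq: "lead_coeff q = fls_compose_power (lead_coeff p) m"
      using mz(1) by (simp add: lead_sp)
    obtain \<nu> A where A: "spl \<nu> q A" using less.hyps[of q] q0 dq mz(1) by (auto simp: degree_sp)
    have nu: "0 < \<nu>" using A by (simp add: spl_def)
    have "subst_pow (m * \<nu>) p = subst_pow \<nu> (subst_pow m p)" using nu mz(1) by (simp add: sp_sp)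
    also have "\<dots> = [:- fls_compose_power z \<nu>, 1:] * subst_pow \<nu> q"
      using nu by (simp only: q sp_mult[OF nu] sp_linear[OF nu])
    also have "\<dots> = smult (fls_compose_power (lead_coeff p) (m * \<nu>))
         (\<Prod>x\<in>#add_mset (fls_compose_power z \<nu>) A. [:-x, 1:])"
      using A nu mz(1) unfolding spl_def by (simp add: lq cp_cp)
    finally have "spl (m * \<nu>) p (add_mset (fls_compose_power z \<nu>) A)"
      using nu mz(1) by (simp add: spl_def)
    then show ?thesis by blast
  qed
qed

lemma spl_common:
  fixes Ps :: "'a::field_char_0 fls poly multiset"
  assumes ac: "ACL TYPE('a)" and nz: "\<forall>P\<in>#Ps. P \<noteq> 0" and d: "0 < d"
  shows "\<exists>\<nu>. 0 < \<nu> \<and> d dvd \<nu> \<and> (\<forall>P\<in>#Ps. \<exists>A. spl \<nu> P A)"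
  using nz
proof (induction Ps)
  case empty
  show ?case using d by (intro exI[of _ d]) simp
next
  case (add P Ps)
  have "\<forall>P\<in>#Ps. P \<noteq> 0" using add.prems by simp
  from add.IH[OF this] obtain \<nu>1 where p1: "0 < \<nu>1" and n1: "d dvd \<nu>1" "\<forall>Q\<in>#Ps. \<exists>A. spl \<nu>1 Q A"
    by (elim exE conjE)
  have "P \<noteq> 0" using add.prems by simp
  then obtain \<nu>0 A0 where A0: "spl \<nu>0 P A0" using puiseux_split[OF ac, of P] by blast
  have p0: "0 < \<nu>0" using A0 by (simp add: spl_def)
  have "spl (\<nu>0 * \<nu>1) P (image_mset (\<lambda>z. fls_compose_power z \<nu>1) A0)"
    by (rule spl_mult[OF A0 p1])
  moreover have "\<exists>A. spl (\<nu>0 * \<nu>1) Q A" if "Q \<in># Ps" for Q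
  proof -
    from n1(2) that obtain A where "spl \<nu>1 Q A" by (elim ballE exE) auto
    then have "spl (\<nu>1 * \<nu>0) Q (image_mset (\<lambda>z. fls_compose_power z \<nu>0) A)" by (rule spl_mult[OF _ p0])
    then have "spl (\<nu>0 * \<nu>1) Q (image_mset (\<lambda>z. fls_compose_power z \<nu>0) A)" by (subst mult.commute)
    then show ?thesis by (rule exI)
  qed
  moreover have "d dvd \<nu>0 * \<nu>1" using n1(1) by simp
  moreover have "0 < \<nu>0 * \<nu>1" using p0 p1 by simp
  ultimately show ?case by (intro exI[of _ "\<nu>0 * \<nu>1"]) auto
qed

lemma ordX_nz: "f \<noteq> 0 \<Longrightarrow> ordX f = ereal (real_of_int (fls_subdegree f))"
  by (simp add: ordX_def)

lemma sum_ordX: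
  "(\<Sum>z\<in>#A. ordX (g z)) =
     (if \<exists>z\<in>#A. g z = 0 then \<infinity> else ereal (real_of_int (\<Sum>z\<in>#A. fls_subdegree (g z))))"
proof (induction A)
  case (add x A)
  show ?case
  proof (cases "g x = 0")
    case True
    then have "(\<Sum>z\<in>#add_mset x A. ordX (g z)) = \<infinity> + (\<Sum>z\<in>#A. ordX (g z))" by (simp add: ordX_def)
    also have "\<dots> = \<infinity>" using add.IH by (simp split: if_splits)
    finally show ?thesis using True by simp
  next
    case False
    then show ?thesis using add.IH by (auto simp: ordX_nz)
  qed
qed simp

definition vl :: "nat \<Rightarrow> 'a::field fls multiset \<Rightarrow> 'a fls poly \<Rightarrow> 'a fls poly \<Rightarrow> ereal" where
  "vl \<nu> A H G = ereal (real (degree G)) * ordX (lead_coeff H)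
      + ereal (1 / real \<nu>) * (\<Sum>z\<in>#A. ordX (poly (subst_pow \<nu> G) z))"

lemma vl_fin:
  assumes "H \<noteq> 0" "0 < \<nu>" "\<forall>z\<in>#A. poly (subst_pow \<nu> G) z \<noteq> 0"
  shows "vl \<nu> A H G = ereal (real (degree G) * real_of_int (fls_subdegree (lead_coeff H))
     + real_of_int (\<Sum>z\<in>#A. fls_subdegree (poly (subst_pow \<nu> G) z)) / real \<nu>)"
  using assms by (auto simp: vl_def sum_ordX ordX_nz)

lemma vl_inf:
  assumes "H \<noteq> 0" "0 < \<nu>" "\<exists>z\<in>#A. poly (subst_pow \<nu> G) z = 0"
  shows "vl \<nu> A H G = \<infinity>"
  using assms by (auto simp: vl_def sum_ordX ordX_nz)

lemma spl_image:
  fixes G :: "'a::field fls poly"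
  assumes "0 < \<nu>1" "0 < k"
  shows "poly (subst_pow (\<nu>1 * k) G) (fls_compose_power z k) = fls_compose_power (poly (subst_pow \<nu>1 G) z) k"
  using assms by (simp add: sp_sp[symmetric] poly_sp)

lemma vl_indep:
  fixes H G :: "'a::field fls poly"
  assumes H0: "H \<noteq> 0" and s1: "spl \<nu>1 H A1" and s2: "spl \<nu>2 H A2"
  shows "vl \<nu>1 A1 H G = vl \<nu>2 A2 H G"
proof -
  have p1: "0 < \<nu>1" and p2: "0 < \<nu>2" using s1 s2 by (auto simp: spl_def)
  define B1 where "B1 = image_mset (\<lambda>z. fls_compose_power z \<nu>2) A1"
  define B2 where "B2 = image_mset (\<lambda>z. fls_compose_power z \<nu>1) A2"
  have t1: "spl (\<nu>1 * \<nu>2) H B1" unfolding B1_def by (rule spl_mult[OF s1 p2])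
  have t2: "spl (\<nu>1 * \<nu>2) H B2" unfolding B2_def using spl_mult[OF s2 p1] by (simp add: mult.commute)
  have lc: "fls_compose_power (lead_coeff H) (\<nu>1 * \<nu>2) \<noteq> 0" using H0 p1 p2 by (simp add: cp_eq0)
  have B12: "B1 = B2" using t1 t2 lc unfolding spl_def by (metis linprod_unique)
  define g where "g = poly (subst_pow (\<nu>1 * \<nu>2) G)"
  define g1 where "g1 = poly (subst_pow \<nu>1 G)"
  define g2 where "g2 = poly (subst_pow \<nu>2 G)"
  have e1: "g (fls_compose_power z \<nu>2) = fls_compose_power (g1 z) \<nu>2" for z
    unfolding g_def g1_def by (rule spl_image[OF p1 p2])
  have e2: "g (fls_compose_power z \<nu>1) = fls_compose_power (g2 z) \<nu>1" for z
    unfolding g_def g2_def using spl_image[OF p2 p1] by (simp add: mult.commute)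
  have Z1: "(\<exists>z\<in>#A1. g1 z = 0) \<longleftrightarrow> (\<exists>z\<in>#B1. g z = 0)"
    by (auto simp: B1_def e1 cp_eq0 p2)
  have Z2: "(\<exists>z\<in>#A2. g2 z = 0) \<longleftrightarrow> (\<exists>z\<in>#B2. g z = 0)"
    by (auto simp: B2_def e2 cp_eq0 p1)
  show ?thesis
  proof (cases "\<exists>z\<in>#B1. g z = 0")
    case True
    then show ?thesis using Z1 Z2 B12 H0 p1 p2 vl_inf[of H \<nu>1 A1 G] vl_inf[of H \<nu>2 A2 G]
      by (simp add: g1_def g2_def)
  next
    case False
    then have n1: "\<forall>z\<in>#A1. g1 z \<noteq> 0" and n2: "\<forall>z\<in>#A2. g2 z \<noteq> 0" using Z1 Z2 B12 by auto
    have R1: "(\<Sum>z\<in>#B1. fls_subdegree (g z)) = int \<nu>2 * (\<Sum>z\<in>#A1. fls_subdegree (g1 z))"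
      by (simp add: B1_def e1 cp_sd p2 sum_mset_distrib_left image_mset.compositionality o_def)
    have R2: "(\<Sum>z\<in>#B2. fls_subdegree (g z)) = int \<nu>1 * (\<Sum>z\<in>#A2. fls_subdegree (g2 z))"
      by (simp add: B2_def e2 cp_sd p1 sum_mset_distrib_left image_mset.compositionality o_def)
    have "int \<nu>2 * (\<Sum>z\<in>#A1. fls_subdegree (g1 z)) = int \<nu>1 * (\<Sum>z\<in>#A2. fls_subdegree (g2 z))"
      using R1 R2 B12 by simp
    then have "real \<nu>2 * real_of_int (\<Sum>z\<in>#A1. fls_subdegree (g1 z)) = real \<nu>1 * real_of_int (\<Sum>z\<in>#A2. fls_subdegree (g2 z))"
      by (metis of_int_mult of_int_of_nat_eq)
    then have "real_of_int (\<Sum>z\<in>#A1. fls_subdegree (g1 z)) / real \<nu>1 = real_of_int (\<Sum>z\<in>#A2. fls_subdegree (g2 z)) / real \<nu>2"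
      using p1 p2 by (simp add: field_simps)
    then show ?thesis using vl_fin[OF H0 p1 n1[unfolded g1_def]] vl_fin[OF H0 p2 n2[unfolded g2_def]]
      by (simp add: g1_def g2_def)
  qed
qed

lemma intm_eval:
  fixes H G :: "'a::field_char_0 fls poly"
  assumes ac: "ACL TYPE('a)" and H0: "H \<noteq> 0" and G0: "G \<noteq> 0" and s: "spl \<nu> H A"
  shows "intm H G = vl \<nu> A H G"
proof -
  obtain \<nu>0 A0 where A0: "spl \<nu>0 H A0" using puiseux_split[OF ac H0] by auto
  define \<nu>' where "\<nu>' = \<nu>0 * fact (degree H)"
  define A' where "A' = image_mset (\<lambda>z. fls_compose_power z (fact (degree H))) A0"
  have s': "spl \<nu>' H A'" unfolding \<nu>'_def A'_def by (rule spl_mult[OF A0]) simp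
  obtain zs where zs: "mset zs = A'" using ex_mset by blast
  have pos: "0 < \<nu>'" using s' by (simp add: spl_def)
  have dv: "degree P dvd \<nu>'" if "monic_irred P \<and> P dvd H" for P
  proof -
    have "degree P \<le> degree H" using that H0 by (simp add: dvd_imp_degree_le)
    moreover have "0 < degree P" using that by (simp add: monic_irred_def)
    ultimately have "degree P dvd fact (degree H)" by (intro dvd_fact) auto
    then show ?thesis by (simp add: \<nu>'_def)
  qed
  have lz: "length zs = degree H" using spl_size[OF s' H0] zs by (metis size_mset)
  have pl: "(\<Prod>z\<leftarrow>zs. [:- z, 1:]) = (\<Prod>x\<in>#A'. [:-x, 1:])"
    by (simp add: zs[symmetric] prod_mset_prod_list[symmetric] mset_map)
  have sl: "(\<Sum>z\<leftarrow>zs. ordX (poly (subst_pow \<nu>' G) z)) = (\<Sum>z\<in>#A'. ordX (poly (subst_pow \<nu>' G) z))"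
    by (simp add: zs[symmetric] sum_mset_sum_list[symmetric] mset_map)
  define Pr where "Pr = (\<lambda>v. \<exists>\<nu> zs. \<nu> > 0 \<and>
              (\<forall>P. monic_irred P \<and> P dvd H \<longrightarrow> degree P dvd \<nu>) \<and>
              length zs = degree H \<and>
              subst_pow \<nu> H = smult (fls_compose_power (lead_coeff H) \<nu>) (\<Prod>z\<leftarrow>zs. [:- z, 1:]) \<and>
              v = ereal (real (degree G)) * ordX (lead_coeff H)
                  + ereal (1 / real \<nu>) * (\<Sum>z\<leftarrow>zs. ordX (poly (subst_pow \<nu> G) z)))"
  have iH: "intm H G = (SOME v. Pr v)" using H0 G0 by (simp add: intm_def Pr_def)
  have "Pr (vl \<nu>' A' H G)"
    unfolding Pr_def
  proof (intro exI[of _ \<nu>'] exI[of _ zs] conjI)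
    show "0 < \<nu>'" by (rule pos)
    show "\<forall>P. monic_irred P \<and> P dvd H \<longrightarrow> degree P dvd \<nu>'" using dv by blast
    show "length zs = degree H" by (rule lz)
    show "subst_pow \<nu>' H = smult (fls_compose_power (lead_coeff H) \<nu>') (\<Prod>z\<leftarrow>zs. [:- z, 1:])"
      using s' unfolding spl_def pl by simp
    show "vl \<nu>' A' H G = ereal (real (degree G)) * ordX (lead_coeff H)
                  + ereal (1 / real \<nu>') * (\<Sum>z\<leftarrow>zs. ordX (poly (subst_pow \<nu>' G) z))"
      unfolding sl vl_def ..
  qed
  then have "Pr (SOME v. Pr v)" by (rule someI)
  then obtain \<nu>2 zs2 where w: "\<nu>2 > 0" "subst_pow \<nu>2 H = smult (fls_compose_power (lead_coeff H) \<nu>2) (\<Prod>z\<leftarrow>zs2. [:- z, 1:])"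
    "(SOME v. Pr v) = ereal (real (degree G)) * ordX (lead_coeff H)
                  + ereal (1 / real \<nu>2) * (\<Sum>z\<leftarrow>zs2. ordX (poly (subst_pow \<nu>2 G) z))"
    unfolding Pr_def by (elim exE conjE) blast
  have s2: "spl \<nu>2 H (mset zs2)" using w(1,2)
    by (simp add: spl_def prod_mset_prod_list[symmetric] mset_map)
  have "(SOME v. Pr v) = vl \<nu>2 (mset zs2) H G"
    using w(3) by (simp add: vl_def sum_mset_sum_list[symmetric] mset_map)
  also have "\<dots> = vl \<nu> A H G" by (rule vl_indep[OF H0 s2 s])
  finally show ?thesis using iH by simp
qed



lemma unity_nz: "\<zeta> ^ \<nu> = (1::'a::field) \<Longrightarrow> 0 < \<nu> \<Longrightarrow> \<zeta> \<noteq> 0"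
  by (metis power_0_left zero_neq_one not_gr0)

lemma sg_sp:
  assumes "\<zeta> ^ \<nu> = 1" "0 < \<nu>"
  shows "map_poly (sg \<zeta>) (subst_pow \<nu> H) = subst_pow \<nu> H"
proof (rule poly_eqI)
  have z: "\<zeta> \<noteq> 0" using unity_nz[of \<zeta> \<nu>] assms by blast
  fix n show "coeff (map_poly (sg \<zeta>) (subst_pow \<nu> H)) n = coeff (subst_pow \<nu> H) n"
    using assms z by (simp add: coeff_map_poly sg_eq0 coeff_sp sg_cp)
qed

lemma poly_sg:
  assumes "\<zeta> \<noteq> 0"
  shows "poly (map_poly (sg \<zeta>) p) (sg \<zeta> x) = sg \<zeta> (poly p x)"
  by (rule rhom.poly_mp[OF sg_rhom[OF assms]])

lemma roots_inv:
  fixes H :: "'a::field fls poly"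
  assumes s: "spl \<nu> H A" and H0: "H \<noteq> 0" and u: "\<zeta> ^ \<nu> = 1"
  shows "image_mset (sg \<zeta>) A = A"
proof -
  have nu: "0 < \<nu>" using s by (simp add: spl_def)
  have z: "\<zeta> \<noteq> 0" using unity_nz[of \<zeta> \<nu>] u nu by blast
  interpret sh: rhom "sg \<zeta>" by (rule sg_rhom[OF z])
  have "subst_pow \<nu> H = map_poly (sg \<zeta>) (subst_pow \<nu> H)" using sg_sp[OF u nu] by simp
  also have "\<dots> = smult (fls_compose_power (lead_coeff H) \<nu>) (\<Prod>x\<in>#image_mset (sg \<zeta>) A. [:-x, 1:])"
    using s unfolding spl_def
    by (simp add: sh.mp_smult sh.mp_prod_mset sh.mp_linear sg_cp[OF u nu] image_mset.compositionality o_def)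
  finally have "smult (fls_compose_power (lead_coeff H) \<nu>) (\<Prod>x\<in>#A. [:-x, 1:]) =
      smult (fls_compose_power (lead_coeff H) \<nu>) (\<Prod>x\<in>#image_mset (sg \<zeta>) A. [:-x, 1:])"
    using s unfolding spl_def by simp
  moreover have "fls_compose_power (lead_coeff H) \<nu> \<noteq> 0" using H0 nu by (simp add: cp_eq0)
  ultimately show ?thesis by (metis linprod_unique)
qed

lemma sd_prod_mset:
  assumes "\<forall>x\<in>#A. (g x :: 'a::field fls) \<noteq> 0"
  shows "fls_subdegree (\<Prod>x\<in>#A. g x) = (\<Sum>x\<in>#A. fls_subdegree (g x))"
  using assms
proof (induction A)
  case (add x A)
  have "(\<Prod>x\<in>#A. g x) \<noteq> 0" using add.prems by (auto simp: prod_mset_zero_iff)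
  moreover have "g x \<noteq> 0" using add.prems by simp
  ultimately show ?case using add by simp
qed simp

lemma integral_sum:
  fixes H G :: "'a::field_char_0 fls poly"
  assumes ac: "ACL TYPE('a)" and s: "spl \<nu> H A" and H0: "H \<noteq> 0"
    and nz: "\<forall>z\<in>#A. poly (subst_pow \<nu> G) z \<noteq> 0"
  shows "int \<nu> dvd (\<Sum>z\<in>#A. fls_subdegree (poly (subst_pow \<nu> G) z))"
proof -
  have nu: "0 < \<nu>" using s by (simp add: spl_def)
  define Pi where "Pi = (\<Prod>z\<in>#A. poly (subst_pow \<nu> G) z)"
  have "sg \<zeta> Pi = Pi" if u: "\<zeta> ^ \<nu> = 1" for \<zeta>
  proof -
    have z: "\<zeta> \<noteq> 0" using unity_nz[of \<zeta> \<nu>] u nu by blast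
    interpret sh: rhom "sg \<zeta>" by (rule sg_rhom[OF z])
    have "sg \<zeta> Pi = (\<Prod>z\<in>#A. sg \<zeta> (poly (subst_pow \<nu> G) z))" unfolding Pi_def by (rule sh.f_prod_mset)
    also have "\<dots> = (\<Prod>z\<in>#A. poly (subst_pow \<nu> G) (sg \<zeta> z))"
      using poly_sg[OF z, of "subst_pow \<nu> G"] sg_sp[OF u nu, of G] by simp
    also have "\<dots> = (\<Prod>z\<in>#image_mset (sg \<zeta>) A. poly (subst_pow \<nu> G) z)"
      by (simp add: image_mset.compositionality o_def)
    also have "\<dots> = Pi" using roots_inv[OF s H0 u] by (simp add: Pi_def)
    finally show ?thesis .
  qed
  then have "int \<nu> dvd fls_subdegree Pi" by (rule inv_sd_dvd[OF ac nu])
  then show ?thesis using sd_prod_mset[of A "poly (subst_pow \<nu> G)"] nz by (simp add: Pi_def)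
qed

lemma unsub_0[simp]: "0 < \<nu> \<Longrightarrow> unsub \<nu> 0 = 0"
  by (rule fls_eqI) (simp add: unsub_nth)

lemma finite_unity: "0 < \<nu> \<Longrightarrow> finite {\<zeta>::'a::field. \<zeta> ^ \<nu> = 1}"
proof -
  assume nu: "0 < \<nu>"
  have "(monom (1::'a) \<nu> + [:-1:]) \<noteq> 0"
    using nu by (metis add.right_neutral coeff_add coeff_monom coeff_pCons_Suc gr0_implies_Suc
        one_neq_zero coeff_0)
  then have fin: "finite {x. poly (monom (1::'a) \<nu> + [:-1:]) x = 0}" by (rule poly_roots_finite)
  have eq: "{x. poly (monom (1::'a) \<nu> + [:-1:]) x = 0} = {\<zeta>. \<zeta> ^ \<nu> = 1}"
    by (auto simp: poly_monom)
  show ?thesis using fin by (simp only: eq)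
qed

lemma spl_root:
  assumes "spl \<nu> P A" "z \<in># A"
  shows "poly (subst_pow \<nu> P) z = 0"
proof -
  have "poly (\<Prod>x\<in>#A. [:-x, 1:]) z = 0"
    using assms(2) by (simp add: poly_prod_mset)
  then show ?thesis using assms(1) by (simp add: spl_def)
qed

lemma conjugate:
  fixes P :: "'a::field_char_0 fls poly"
  assumes ac: "ACL TYPE('a)" and irr: "irreducible P" and s: "spl \<nu> P A"
    and z: "z \<in># A" and z': "z' \<in># A"
  shows "\<exists>\<zeta>. \<zeta> ^ \<nu> = 1 \<and> z' = sg \<zeta> z"
proof -
  have nu: "0 < \<nu>" using s by (simp add: spl_def)
  have P0: "P \<noteq> 0" using irr by auto
  define U where "U = {\<zeta>::'a. \<zeta> ^ \<nu> = 1}"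
  have finU: "finite U" unfolding U_def by (rule finite_unity[OF nu])
  define Q where "Q = (\<Prod>\<zeta>\<in>U. [:- sg \<zeta> z, 1:])"
  have Qinv: "map_poly (sg \<xi>) Q = Q" if xi: "\<xi> \<in> U" for \<xi>
  proof -
    have x0: "\<xi> \<noteq> 0" using unity_nz[of \<xi> \<nu>] xi nu by (simp add: U_def)
    have "map_poly (sg \<xi>) Q = (\<Prod>\<zeta>\<in>U. [:- sg \<xi> (sg \<zeta> z), 1:])"
      unfolding Q_def by (simp only: rhom.mp_prod[OF sg_rhom[OF x0]] rhom.mp_linear[OF sg_rhom[OF x0]])
    also have "\<dots> = (\<Prod>\<zeta>\<in>U. [:- sg (\<xi> * \<zeta>) z, 1:])"
    proof (rule prod.cong[OF refl])
      fix \<zeta> assume "\<zeta> \<in> U"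
      then have "\<zeta> \<noteq> 0" using unity_nz[of \<zeta> \<nu>] nu by (simp add: U_def)
      then show "[:- sg \<xi> (sg \<zeta> z), 1:] = [:- sg (\<xi> * \<zeta>) z, 1:]" using sg_sg[OF _ x0] by simp
    qed
    also have "\<dots> = (\<Prod>\<zeta>\<in>U. [:- sg \<zeta> z, 1:])"
    proof (rule prod.reindex_bij_betw)
      show "bij_betw ((*) \<xi>) U U"
      proof (rule bij_betw_imageI)
        show "inj_on ((*) \<xi>) U" using x0 by (auto intro: inj_onI)
        show "(*) \<xi> ` U = U"
        proof
          show "(*) \<xi> ` U \<subseteq> U" using xi by (auto simp: U_def power_mult_distrib)
          show "U \<subseteq> (*) \<xi> ` U"
          proof
            fix \<zeta> assume "\<zeta> \<in> U"
            then have "inverse \<xi> * \<zeta> \<in> U" using xi by (auto simp: U_def power_mult_distrib power_inverse)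
            moreover have "\<zeta> = \<xi> * (inverse \<xi> * \<zeta>)" using x0 by simp
            ultimately show "\<zeta> \<in> (*) \<xi> ` U" by blast
          qed
        qed
      qed
    qed
    finally show ?thesis unfolding Q_def .
  qed
  have cinv: "fls_compose_power (unsub \<nu> (coeff Q i)) \<nu> = coeff Q i" for i
  proof (rule inv_imp_cp[OF ac nu])
    fix \<xi> :: 'a assume "\<xi> ^ \<nu> = 1"
    then have xi: "\<xi> \<in> U" by (simp add: U_def)
    have x0: "\<xi> \<noteq> 0" using unity_nz[of \<xi> \<nu>] xi nu by (simp add: U_def)
    show "sg \<xi> (coeff Q i) = coeff Q i"
      using arg_cong[OF Qinv[OF xi], of "\<lambda>p. coeff p i"] x0 by (simp add: coeff_map_poly sg_eq0)
  qed
  define Q0 where "Q0 = map_poly (unsub \<nu>) Q"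
  have QQ0: "subst_pow \<nu> Q0 = Q"
    by (rule poly_eqI) (simp add: coeff_sp nu Q0_def coeff_map_poly cinv)
  have one_in: "1 \<in> U" by (simp add: U_def)
  have Qz: "poly Q z = 0"
    unfolding Q_def using finU one_in by (auto simp: poly_prod intro!: bexI[of _ 1])
  have Pz: "poly (subst_pow \<nu> P) z = 0" by (rule spl_root[OF s z])
  have "P dvd Q0"
  proof (rule ccontr)
    assume nd: "\<not> P dvd Q0"
    have "\<exists>s t. s * P + t * Q0 = 1"
    proof (rule poly_bezout_one[OF P0])
      fix d assume d: "d dvd P" "d dvd Q0" "d \<noteq> 0"
      from d(1) obtain k where k: "P = d * k" by (elim dvdE)
      have "is_unit d \<or> is_unit k" using irr k by (simp add: irreducible_def)
      then show "degree d = 0"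
      proof
        assume "is_unit d" then show ?thesis by (simp add: is_unit_iff_degree d(3))
      next
        assume "is_unit k"
        then have "P dvd d" using k by (metis dvd_mult_unit_iff dvd_refl)
        then have "P dvd Q0" using d(2) by (rule dvd_trans)
        then show ?thesis using nd by simp
      qed
    qed
    then obtain s t where st: "s * P + t * Q0 = 1" by blast
    have "subst_pow \<nu> s * subst_pow \<nu> P + subst_pow \<nu> t * Q = 1"
      using arg_cong[OF st, of "subst_pow \<nu>"] nu by (simp add: sp_add sp_mult sp_one QQ0)
    then have "poly (subst_pow \<nu> s * subst_pow \<nu> P + subst_pow \<nu> t * Q) z = 1" by simp
    then show False using Pz Qz by simp
  qed
  then have "subst_pow \<nu> P dvd Q" using sp_dvd[OF nu] QQ0 by metis
  moreover have "poly (subst_pow \<nu> P) z' = 0" by (rule spl_root[OF s z'])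
  ultimately have "poly Q z' = 0" by (metis dvdE mult_zero_left poly_mult)
  then obtain \<zeta> where "\<zeta> \<in> U" "z' - sg \<zeta> z = 0"
    unfolding Q_def using finU by (auto simp: poly_prod)
  then show ?thesis by (auto simp: U_def)
qed

lemma chain_rule:
  "fls_deriv (poly p w) = poly (map_poly fls_deriv p) w + poly (pderiv p) w * fls_deriv (w :: 'a::field fls)"
proof (induction p)
  case (pCons a p)
  show ?case
    by (simp add: map_poly_pCons pderiv_pCons pCons.IH algebra_simps)
qed simp

lemma deriv_cp:
  fixes c :: "'a::field_char_0 fls"
  assumes nu: "0 < \<nu>"
  shows "fls_deriv (fls_compose_power c \<nu>) =
     fls_const (of_nat \<nu>) * fls_shift (1 - int \<nu>) (fls_compose_power (fls_deriv c) \<nu>)"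
proof (rule fls_eqI)
  fix n :: int
  have dv: "int \<nu> dvd n + 1 \<longleftrightarrow> int \<nu> dvd n + 1 - int \<nu>"
    by (metis dvd_diff dvd_refl diff_add_cancel dvd_add)
  show "fls_deriv (fls_compose_power c \<nu>) $$ n =
     (fls_const (of_nat \<nu>) * fls_shift (1 - int \<nu>) (fls_compose_power (fls_deriv c) \<nu>)) $$ n"
  proof (cases "int \<nu> dvd n + 1")
    case True
    then obtain m where m: "n + 1 = int \<nu> * m" by (elim dvdE)
    have a: "(n + 1) div int \<nu> = m" using nu m by simp
    have b: "(n + (1 - int \<nu>)) div int \<nu> = m - 1"
    proof -
      have "n + (1 - int \<nu>) = int \<nu> * (m - 1)" using m by (simp add: algebra_simps)
      then show ?thesis using nu by simp
    qed
    have c2: "int \<nu> dvd n + (1 - int \<nu>)" using True dv by (simp add: algebra_simps)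
    have "of_int (n + 1) = (of_nat \<nu> * of_int m :: 'a)" using m by (metis of_int_mult of_int_of_nat_eq)
    then show ?thesis using nu True c2 by (simp add: fls_nth_compose_power a b)
  next
    case False
    have c2: "\<not> int \<nu> dvd n + (1 - int \<nu>)" using False dv by (simp add: algebra_simps)
    then show ?thesis using nu False by (simp add: fls_nth_compose_power)
  qed
qed

lemma deriv_sp:
  fixes F :: "'a::field_char_0 fls poly"
  assumes nu: "0 < \<nu>"
  shows "map_poly fls_deriv (subst_pow \<nu> F) =
     smult (fls_const (of_nat \<nu>) * fls_shift (1 - int \<nu>) 1) (subst_pow \<nu> (map_poly fls_deriv F))"
  by (rule poly_eqI) (simp add: coeff_map_poly coeff_sp nu deriv_cp fls_shifted_times_simps mult_ac)

lemma sd_deriv_nc: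
  fixes g :: "'a::field_char_0 fls"
  assumes "g \<noteq> fls_const (g $$ 0)"
  shows "fls_subdegree (fls_deriv g) = fls_subdegree (g - fls_const (g $$ 0)) - 1"
proof -
  define g' where "g' = g - fls_const (g $$ 0)"
  have g'0: "g' \<noteq> 0" using assms by (simp add: g'_def)
  have "g' $$ 0 = 0" by (simp add: g'_def)
  then have "fls_subdegree g' \<noteq> 0" using nth_fls_subdegree_nonzero[OF g'0] by auto
  then have "fls_subdegree (fls_deriv g') = fls_subdegree g' - 1" by (rule fls_subdegree_deriv)
  moreover have "fls_deriv g' = fls_deriv g" by (simp add: g'_def)
  ultimately show ?thesis by (simp add: g'_def)
qed



lemma sum_mset_swap:
  "(\<Sum>x\<in>#A. \<Sum>y\<in>#B. f x y) = (\<Sum>y\<in>#B. \<Sum>x\<in>#A. (f x y :: 'b::comm_monoid_add))"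
  by (induction A) (simp_all add: sum_mset.distrib)

lemma sd_linprod:
  assumes "\<forall>w\<in>#B. z \<noteq> w"
  shows "fls_subdegree (poly (\<Prod>x\<in>#B. [:-x, 1:]) z) = (\<Sum>w\<in>#B. fls_subdegree (z - w :: 'a::field fls))"
  using assms
proof (induction B)
  case (add x B)
  have nz1: "poly (\<Prod>x\<in>#B. [:-x, 1:]) z \<noteq> 0" using add.prems by (auto simp: poly_prod_mset)
  have nz2: "z - x \<noteq> 0" using add.prems by simp
  have e: "poly (\<Prod>x\<in>#add_mset x B. [:-x, 1:]) z = (z - x) * poly (\<Prod>x\<in>#B. [:-x, 1:]) z"
    by (simp add: algebra_simps)
  have "fls_subdegree ((z - x) * poly (\<Prod>x\<in>#B. [:-x, 1:]) z) =
      fls_subdegree (z - x) + fls_subdegree (poly (\<Prod>x\<in>#B. [:-x, 1:]) z)"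
    using nz1 nz2 by (intro fls_subdegree_mult)
  also have "fls_subdegree (poly (\<Prod>x\<in>#B. [:-x, 1:]) z) = (\<Sum>w\<in>#B. fls_subdegree (z - w))"
    using add by simp
  finally show ?case unfolding e by simp
qed simp

lemma intm_fin:
  fixes H G :: "'a::field_char_0 fls poly"
  assumes ac: "ACL TYPE('a)" and H0: "H \<noteq> 0" and G0: "G \<noteq> 0" and s: "spl \<nu> H A"
    and nz: "\<forall>z\<in>#A. poly (subst_pow \<nu> G) z \<noteq> 0"
  shows "intm H G = ereal (real (degree G) * real_of_int (fls_subdegree (lead_coeff H))
     + real_of_int (\<Sum>z\<in>#A. fls_subdegree (poly (subst_pow \<nu> G) z)) / real \<nu>)"
proof -
  have nu: "0 < \<nu>" using s by (simp add: spl_def)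
  show ?thesis using intm_eval[OF ac H0 G0 s] vl_fin[OF H0 nu nz] by simp
qed

lemma intm_sym:
  fixes H G :: "'a::field_char_0 fls poly"
  assumes ac: "ACL TYPE('a)" and H0: "H \<noteq> 0" and G0: "G \<noteq> 0"
    and sH: "spl \<nu> H A" and sG: "spl \<nu> G B"
    and nz: "\<forall>z\<in>#A. poly (subst_pow \<nu> G) z \<noteq> 0"
  shows "intm H G = intm G H"
proof -
  have nu: "0 < \<nu>" using sH by (simp add: spl_def)
  have lH: "fls_compose_power (lead_coeff H) \<nu> \<noteq> 0" and lG: "fls_compose_power (lead_coeff G) \<nu> \<noteq> 0"
    using H0 G0 nu by (simp_all add: cp_eq0)
  have pG: "poly (subst_pow \<nu> G) x = fls_compose_power (lead_coeff G) \<nu> * poly (\<Prod>y\<in>#B. [:-y, 1:]) x" for x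
    using sG by (simp add: spl_def)
  have pH: "poly (subst_pow \<nu> H) x = fls_compose_power (lead_coeff H) \<nu> * poly (\<Prod>y\<in>#A. [:-y, 1:]) x" for x
    using sH by (simp add: spl_def)
  have neq: "z \<noteq> w" if "z \<in># A" "w \<in># B" for z w
  proof
    assume "z = w"
    then have "poly (subst_pow \<nu> G) z = 0" using spl_root[OF sG that(2)] by simp
    then show False using nz that(1) by simp
  qed
  have nz2: "\<forall>w\<in>#B. poly (subst_pow \<nu> H) w \<noteq> 0"
    using lH by (auto simp: pH poly_prod_mset) (use neq in blast)
  have sdG: "fls_subdegree (poly (subst_pow \<nu> G) z) = int \<nu> * fls_subdegree (lead_coeff G) + (\<Sum>w\<in>#B. fls_subdegree (z - w))"
    if "z \<in># A" for z
  proof -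
    have "poly (\<Prod>y\<in>#B. [:-y, 1:]) z \<noteq> 0" using nz that pG by auto
    then show ?thesis using lG nu neq[OF that] by (simp add: pG cp_sd sd_linprod)
  qed
  have sdH: "fls_subdegree (poly (subst_pow \<nu> H) w) = int \<nu> * fls_subdegree (lead_coeff H) + (\<Sum>z\<in>#A. fls_subdegree (w - z))"
    if "w \<in># B" for w
  proof -
    have "poly (\<Prod>y\<in>#A. [:-y, 1:]) w \<noteq> 0" using nz2 that pH by auto
    moreover have "\<forall>z\<in>#A. w \<noteq> z" using neq that by blast
    ultimately show ?thesis using lH nu by (simp add: pH cp_sd sd_linprod)
  qed
  define T where "T = (\<Sum>z\<in>#A. \<Sum>w\<in>#B. fls_subdegree (z - w))"
  have T2: "(\<Sum>w\<in>#B. \<Sum>z\<in>#A. fls_subdegree (w - z)) = T"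
    unfolding T_def by (subst sum_mset_swap) (simp add: fls_subdegree_minus_sym)
  have sA: "size A = degree H" by (rule spl_size[OF sH H0])
  have sB: "size B = degree G" by (rule spl_size[OF sG G0])
  have S1: "(\<Sum>z\<in>#A. fls_subdegree (poly (subst_pow \<nu> G) z)) = int (degree H) * (int \<nu> * fls_subdegree (lead_coeff G)) + T"
  proof -
    have "(\<Sum>z\<in>#A. fls_subdegree (poly (subst_pow \<nu> G) z)) =
          (\<Sum>z\<in>#A. int \<nu> * fls_subdegree (lead_coeff G) + (\<Sum>w\<in>#B. fls_subdegree (z - w)))"
      by (rule arg_cong[where f=sum_mset], rule image_mset_cong) (rule sdG)
    also have "\<dots> = int (size A) * (int \<nu> * fls_subdegree (lead_coeff G)) + T"
      by (simp add: T_def sum_mset.distrib sum_mset_constant)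
    finally show ?thesis using sA by simp
  qed
  have S2: "(\<Sum>w\<in>#B. fls_subdegree (poly (subst_pow \<nu> H) w)) = int (degree G) * (int \<nu> * fls_subdegree (lead_coeff H)) + T"
  proof -
    have "(\<Sum>w\<in>#B. fls_subdegree (poly (subst_pow \<nu> H) w)) =
          (\<Sum>w\<in>#B. int \<nu> * fls_subdegree (lead_coeff H) + (\<Sum>z\<in>#A. fls_subdegree (w - z)))"
      by (rule arg_cong[where f=sum_mset], rule image_mset_cong) (rule sdH)
    also have "\<dots> = int (size B) * (int \<nu> * fls_subdegree (lead_coeff H)) + T"
      by (simp add: T2 sum_mset.distrib sum_mset_constant)
    finally show ?thesis using sB by simp
  qed
  show ?thesis
    using nu by (simp add: intm_fin[OF ac H0 G0 sH nz] intm_fin[OF ac G0 H0 sG nz2] S1 S2 field_simps)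
qed

lemma regroup:
  fixes S :: "'b set" and key :: "'c \<Rightarrow> 'b option" and \<phi> :: "'c \<Rightarrow> ereal"
  assumes "finite S"
  shows "(\<Sum>l\<in>S. sum_mset (image_mset \<phi> (filter_mset (\<lambda>P. key P = Some l) M))) =
         sum_mset (image_mset \<phi> (filter_mset (\<lambda>P. \<exists>l\<in>S. key P = Some l) M))"
proof (induction M)
  case empty then show ?case by simp
next
  case (add x M)
  show ?case
  proof (cases "\<exists>l\<in>S. key x = Some l")
    case True
    then obtain l0 where l0: "l0 \<in> S" "key x = Some l0" by blast
    have "(\<Sum>l\<in>S. sum_mset (image_mset \<phi> (filter_mset (\<lambda>P. key P = Some l) (add_mset x M)))) =
          (\<Sum>l\<in>S. (if l = l0 then \<phi> x else 0) + sum_mset (image_mset \<phi> (filter_mset (\<lambda>P. key P = Some l) M)))"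
      by (rule sum.cong) (auto simp: l0)
    also have "\<dots> = \<phi> x + (\<Sum>l\<in>S. sum_mset (image_mset \<phi> (filter_mset (\<lambda>P. key P = Some l) M)))"
      using assms l0 by (simp add: sum.distrib)
    finally show ?thesis using add True by simp
  next
    case False
    have "(\<Sum>l\<in>S. sum_mset (image_mset \<phi> (filter_mset (\<lambda>P. key P = Some l) (add_mset x M)))) =
          (\<Sum>l\<in>S. sum_mset (image_mset \<phi> (filter_mset (\<lambda>P. key P = Some l) M)))"
      by (rule sum.cong) (use False in auto)
    then show ?thesis using add False by simp
  qed
qed

lemma sd_pos_const:
  fixes g :: "'a::field fls"
  assumes "g \<noteq> 0" "0 \<le> fls_subdegree g" "g \<noteq> fls_const l"
  shows "0 < fls_subdegree (g - fls_const l) \<longleftrightarrow> l = g $$ 0"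
proof
  assume H: "0 < fls_subdegree (g - fls_const l)"
  have "(g - fls_const l) $$ 0 = 0" using H by (intro fls_eq0_below_subdegree) simp
  then show "l = g $$ 0" by simp
next
  assume l: "l = g $$ 0"
  have ne: "g - fls_const l \<noteq> 0" using assms(3) by simp
  have "1 \<le> fls_subdegree (g - fls_const l)"
  proof (rule fls_subdegree_geI[OF ne])
    fix k :: int assume "k < 1"
    show "(g - fls_const l) $$ k = 0"
    proof (cases "k = 0")
      case False
      then have "k < fls_subdegree g" using \<open>k < 1\<close> assms(2) by simp
      then show ?thesis using False by (simp add: fls_eq0_below_subdegree)
    qed (simp add: l)
  qed
  then show "0 < fls_subdegree (g - fls_const l)" by simp
qed

lemma sd_minus_const_same:
  fixes g :: "'a::field fls"
  assumes "g \<noteq> 0" "fls_subdegree g \<noteq> 0" "g \<noteq> fls_const (g $$ 0)"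
  shows "fls_subdegree (g - fls_const (g $$ 0)) = fls_subdegree g"
proof (cases "0 < fls_subdegree g")
  case True
  then have "g $$ 0 = 0" by (intro fls_eq0_below_subdegree) simp
  then show ?thesis by simp
next
  case False
  then have neg: "fls_subdegree g < 0" using assms(2) by simp
  show ?thesis
  proof (rule fls_subdegree_eqI)
    show "(g - fls_const (g $$ 0)) $$ fls_subdegree g \<noteq> 0" using neg assms(1) by simp
    fix k assume "k < fls_subdegree g"
    then show "(g - fls_const (g $$ 0)) $$ k = 0" using neg by (simp add: fls_eq0_below_subdegree)
  qed
qed



lemma prod_linprod_sum:
  "(\<Prod>P\<in>#Ps. \<Prod>x\<in>#R P. [:-x, 1:]) = (\<Prod>x\<in>#(\<Sum>P\<in>#Ps. R P). [:-x, (1::'a::comm_ring_1):])"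
  by (induction Ps) simp_all

lemma sum_sum_mset:
  "(\<Sum>x\<in>#(\<Sum>P\<in>#Ps. R P). g x) = (\<Sum>P\<in>#Ps. \<Sum>x\<in>#R P. (g x :: 'b::comm_monoid_add))"
  by (induction Ps) simp_all

lemma mem_sum_mset: "P \<in># Ps \<Longrightarrow> z \<in># R P \<Longrightarrow> z \<in># (\<Sum>P\<in>#Ps. R P)"
  by (induction Ps) auto

lemma ereal_sum_div:
  "(\<Sum>P\<in>#M. ereal (real_of_int (g P) / real \<nu>)) = ereal (real_of_int (\<Sum>P\<in>#M. g P) / real \<nu>)"
  by (induction M) (simp_all add: add_divide_distrib)

lemma sum_mset_aux:
  "(\<Sum>w\<in>#W. g w + h w - (c::int)) = (\<Sum>w\<in>#W. g w) + (\<Sum>w\<in>#W. h w) - int (size W) * c"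
  by (induction W) (simp_all add: algebra_simps)

lemma sum_if_filter:
  "(\<Sum>P\<in>#M. if Q P then g P else (0::'b::comm_monoid_add)) = (\<Sum>P\<in>#filter_mset Q M. g P)"
  by (induction M) simp_all

lemma sum_const_on:
  assumes "\<And>z. z \<in># R \<Longrightarrow> g z = (c::int)"
  shows "(\<Sum>z\<in>#R. g z) = int (size R) * c"
proof -
  have "(\<Sum>z\<in>#R. g z) = (\<Sum>z\<in>#R. c)"
    by (rule arg_cong[where f=sum_mset], rule image_mset_cong) (rule assms)
  then show ?thesis by (simp add: sum_mset_constant)
qed

theorem mainTheorem3:
  fixes F :: "'a::field_char_0 fls poly"
  assumes alg_closed: "\<forall>p::'a poly. degree p > 0 \<longrightarrow> (\<exists>x. poly p x = 0)"
    and k_monic: "\<exists>c. c \<noteq> 0 \<and> lead_coeff F = fls_const c"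
    and deg_pos: "degree F > 0"
    and gcd_one: "\<forall>c::'a. intm (pderiv F) (F - [:fls_const c:]) \<noteq> (\<infinity>::ereal)"
  shows "\<exists>a b c :: int.
           intm (map_poly fls_deriv F) (pderiv F) = ereal (real_of_int a) \<and>
           intm F (pderiv F) = ereal (real_of_int b) \<and>
           betabar F = ereal (real_of_int c) \<and>
           a = b - int (degree F) + 1 + c"
proof -
  have ac: "ACL TYPE('a)" unfolding ACL_def using alg_closed by blast
  obtain c0 where c0: "c0 \<noteq> 0" "lead_coeff F = fls_const c0" using k_monic by blast
  define N where "N = degree F"
  define D where "D = pderiv F"
  define Fx where "Fx = map_poly fls_deriv F"
  have F0: "F \<noteq> 0" using deg_pos by auto
  have D0: "D \<noteq> 0" using deg_pos by (simp add: D_def pderiv_eq_0_iff)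
  have dD: "degree D = N - 1" by (simp add: D_def N_def degree_pderiv)
  have lD: "lead_coeff D = fls_const (of_nat N * c0)"
  proof -
    have "lead_coeff D = coeff D (N - 1)" by (simp add: dD)
    also have "\<dots> = of_nat (Suc (N - 1)) * coeff F (Suc (N - 1))" by (simp add: D_def coeff_pderiv)
    also have "Suc (N - 1) = N" using deg_pos by (simp add: N_def)
    finally show ?thesis using c0 by (simp add: N_def fls_of_nat)
  qed
  have sdlD: "fls_subdegree (lead_coeff D) = 0" by (simp add: lD)
  define Ps where "Ps = factors D"
  have facex: "\<exists>Hs. (\<forall>P\<in>#Hs. monic_irred P) \<and> D = smult (lead_coeff D) (prod_mset Hs)"
    using monic_irred_factorization[OF D0] by (auto simp: monic_irred_def)
  have fac: "(\<forall>P\<in>#Ps. monic_irred P) \<and> D = smult (lead_coeff D) (prod_mset Ps)"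
    unfolding Ps_def factors_def by (rule someI_ex[OF facex])
  have Pmi: "lead_coeff P = 1" "irreducible P" "0 < degree P" "P \<noteq> 0" if "P \<in># Ps" for P
    using fac that by (auto simp: monic_irred_def)
  define M0 where "M0 = Ps + {#F#} + (if Fx = 0 then {#} else {#Fx#})"
  have M0nz: "\<forall>P\<in>#M0. P \<noteq> 0" using Pmi F0 by (auto simp: M0_def)
  obtain \<nu> where nu: "0 < \<nu>" and splM: "\<forall>P\<in>#M0. \<exists>A. spl \<nu> P A"
    using spl_common[OF ac M0nz, of 1] by auto
  have "F \<in># M0" by (simp add: M0_def)
  then obtain AF where sF: "spl \<nu> F AF" using splM by blast
  have sFx: "\<exists>AX. spl \<nu> Fx AX" if "Fx \<noteq> 0"
  proof -
    have "Fx \<in># M0" using that by (simp add: M0_def)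
    then show ?thesis using splM by blast
  qed
  define RT :: "'a fls poly \<Rightarrow> 'a fls multiset" where "RT P = (SOME A. spl \<nu> P A)" for P
  have sP: "spl \<nu> P (RT P)" if "P \<in># Ps" for P
  proof -
    have "P \<in># M0" using that by (simp add: M0_def)
    then have "\<exists>A. spl \<nu> P A" using splM by blast
    then show ?thesis unfolding RT_def by (rule someI_ex)
  qed
  define W where "W = (\<Sum>P\<in>#Ps. RT P)"
  have sW: "spl \<nu> D W"
  proof -
    have "subst_pow \<nu> D = smult (fls_compose_power (lead_coeff D) \<nu>) (subst_pow \<nu> (prod_mset Ps))"
      using fac nu by (metis sp_smult)
    also have "subst_pow \<nu> (prod_mset Ps) = (\<Prod>P\<in>#Ps. subst_pow \<nu> P)" using nu by (simp add: sp_prod_mset')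
    also have "\<dots> = (\<Prod>P\<in>#Ps. \<Prod>x\<in>#RT P. [:-x, 1:])"
    proof (rule arg_cong[where f=prod_mset], rule image_mset_cong)
      fix P assume P: "P \<in># Ps"
      show "subst_pow \<nu> P = (\<Prod>x\<in>#RT P. [:-x, 1:])"
        using sP[OF P] Pmi[OF P] nu by (simp add: spl_def)
    qed
    also have "\<dots> = (\<Prod>x\<in>#W. [:-x, 1:])" by (simp add: W_def prod_linprod_sum)
    finally show ?thesis using nu by (simp add: spl_def)
  qed
  have sizeW: "size W = N - 1" using spl_size[OF sW D0] dD by simp
  have memW: "z \<in># W" if "P \<in># Ps" "z \<in># RT P" for P z
    unfolding W_def by (rule mem_sum_mset[where R=RT, OF that])
  define f where "f w = poly (subst_pow \<nu> F) w" for w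
  define fx where "fx w = poly (subst_pow \<nu> Fx) w" for w
  have Fc0: "F - [:fls_const c:] \<noteq> 0" for c
  proof
    assume "F - [:fls_const c:] = 0"
    then have "F = [:fls_const c:]" by simp
    then show False using deg_pos by simp
  qed
  have spFc: "poly (subst_pow \<nu> (F - [:fls_const c:])) w = f w - fls_const c" for c w
    using nu by (simp add: f_def sp_diff sp_const)
  have fnc: "f w \<noteq> fls_const c" if "w \<in># W" for w c
  proof
    assume H: "f w = fls_const c"
    have "intm D (F - [:fls_const c:]) = vl \<nu> W D (F - [:fls_const c:])"
      by (rule intm_eval[OF ac D0 Fc0 sW])
    also have "\<dots> = \<infinity>" using that H nu D0 by (intro vl_inf) (auto simp: spFc)
    finally show False using gcd_one by (simp add: D_def)
  qed
  have f0: "f w \<noteq> 0" if "w \<in># W" for w using fnc[OF that, of 0] by simp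
  define K :: "'a fls" where "K = fls_const (of_nat \<nu>) * fls_shift (1 - int \<nu>) 1"
  have K0: "K \<noteq> 0" using nu by (simp add: K_def fls_shift_eq0_iff)
  have sdK: "fls_subdegree K = int \<nu> - 1"
  proof -
    have a1: "fls_const (of_nat \<nu> :: 'a) \<noteq> 0" using nu by simp
    have a2: "fls_shift (1 - int \<nu>) (1::'a fls) \<noteq> 0" by (simp add: fls_shift_eq0_iff)
    have "fls_subdegree K = fls_subdegree (fls_const (of_nat \<nu> :: 'a)) + fls_subdegree (fls_shift (1 - int \<nu>) (1::'a fls))"
      unfolding K_def by (rule fls_subdegree_mult[OF a1 a2])
    also have "\<dots> = int \<nu> - 1" by simp
    finally show ?thesis .
  qed
  have dfw: "fls_deriv (f w) = K * fx w" if "w \<in># W" for w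
  proof -
    have "fls_deriv (f w) = poly (map_poly fls_deriv (subst_pow \<nu> F)) w + poly (pderiv (subst_pow \<nu> F)) w * fls_deriv w"
      unfolding f_def by (rule chain_rule)
    also have "pderiv (subst_pow \<nu> F) = subst_pow \<nu> D" using nu by (simp add: D_def sp_pderiv)
    also have "poly (subst_pow \<nu> D) w = 0" by (rule spl_root[OF sW that])
    also have "map_poly fls_deriv (subst_pow \<nu> F) = smult K (subst_pow \<nu> Fx)"
      unfolding K_def Fx_def by (rule deriv_sp[OF nu])
    finally show ?thesis by (simp add: fx_def)
  qed
  define Aw where "Aw w = fls_subdegree (f w - fls_const (f w $$ 0))" for w
  define Bw where "Bw w = fls_subdegree (f w)" for w
  have fx_prop: "fx w \<noteq> 0 \<and> fls_subdegree (fx w) = Aw w - int \<nu>" if w: "w \<in># W" for w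
  proof -
    have nc: "f w \<noteq> fls_const (f w $$ 0)" by (rule fnc[OF w])
    then have d0: "fls_deriv (f w) \<noteq> 0" by (simp add: fls_deriv_eq_0_iff)
    then have fx0: "fx w \<noteq> 0" using dfw[OF w] by auto
    have "fls_subdegree (fls_deriv (f w)) = Aw w - 1" unfolding Aw_def by (rule sd_deriv_nc[OF nc])
    moreover have "fls_subdegree (fls_deriv (f w)) = fls_subdegree K + fls_subdegree (fx w)"
      using dfw[OF w] K0 fx0 by simp
    ultimately show ?thesis using fx0 sdK by simp
  qed
  have Fx0W: "W = {#}" if "Fx = 0"
  proof (rule ccontr)
    assume "W \<noteq> {#}"
    then obtain w where "w \<in># W" by blast
    then show False using fx_prop[of w] that by (simp add: fx_def)
  qed
  have ABrel: "Aw w = Bw w + (if Bw w = 0 then Aw w else 0)" if w: "w \<in># W" for w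
  proof (cases "Bw w = 0")
    case False
    then show ?thesis using sd_minus_const_same[OF f0[OF w] _ fnc[OF w]] by (simp add: Aw_def Bw_def)
  qed simp
  define SB where "SB = (\<Sum>w\<in>#W. Bw w)"
  define SX where "SX = (\<Sum>w\<in>#W. fls_subdegree (fx w))"
  define SC where "SC = (\<Sum>w\<in>#W. if Bw w = 0 then Aw w else 0)"
  have SXeq: "SX = SB + SC - int \<nu> * (int N - 1)"
  proof -
    have "SX = (\<Sum>w\<in>#W. Bw w + (if Bw w = 0 then Aw w else 0) - int \<nu>)"
      unfolding SX_def
      by (rule arg_cong[where f=sum_mset], rule image_mset_cong) (use fx_prop ABrel in auto)
    also have "\<dots> = SB + SC - int (size W) * int \<nu>"
      by (simp only: SB_def SC_def sum_mset_aux)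
    finally show ?thesis using sizeW deg_pos by (simp add: N_def of_nat_diff mult.commute)
  qed
  have intDF: "intm D F = ereal (real_of_int SB / real \<nu>)"
    using intm_fin[OF ac D0 F0 sW] f0 sdlD by (simp add: SB_def Bw_def f_def)
  have "intm D F = intm F D"
    by (rule intm_sym[OF ac D0 F0 sW sF]) (use f0 in \<open>simp add: f_def\<close>)
  then have intFD: "intm F D = intm D F" by simp
  have intFxD: "intm Fx D = ereal (real_of_int SX / real \<nu>)"
  proof (cases "Fx = 0")
    case True
    then have "W = {#}" by (rule Fx0W)
    then have "N - 1 = 0" using sizeW by simp
    then have "degree D = 0" using dD by simp
    then show ?thesis using True \<open>W = {#}\<close> D0 by (simp add: intm_def SX_def)
  next
    case False
    then obtain AX where sX: "spl \<nu> Fx AX" using sFx by blast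
    have nzx: "\<forall>z\<in>#W. poly (subst_pow \<nu> Fx) z \<noteq> 0" using fx_prop by (simp add: fx_def)
    have "intm D Fx = intm Fx D" by (rule intm_sym[OF ac D0 False sW sX nzx])
    moreover have "intm D Fx = ereal (real_of_int SX / real \<nu>)"
      using intm_fin[OF ac D0 False sW nzx] sdlD by (simp add: SX_def fx_def)
    ultimately show ?thesis by simp
  qed
  have dvB: "int \<nu> dvd SB"
    using integral_sum[OF ac sW D0, of F] f0 by (simp add: SB_def Bw_def f_def)
  have dvX: "int \<nu> dvd SX"
    using integral_sum[OF ac sW D0, of Fx] fx_prop by (simp add: SX_def fx_def)
  have betaeq: "betabar F = ereal (real_of_int SC / real \<nu>)"
  proof -
    define zP where "zP P = (SOME z. z \<in># RT P)" for P
    have zPin: "zP P \<in># RT P" if P: "P \<in># Ps" for P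
    proof -
      have "size (RT P) = degree P" by (rule spl_size[OF sP[OF P] Pmi(4)[OF P]])
      then have "RT P \<noteq> {#}" using Pmi(3)[OF P] by auto
      then obtain x where "x \<in># RT P" by blast
      then show ?thesis unfolding zP_def by (rule someI)
    qed
    have conjf: "\<exists>\<zeta>. \<zeta> \<noteq> 0 \<and> f z = sg \<zeta> (f (zP P))" if P: "P \<in># Ps" and z: "z \<in># RT P" for P z
    proof -
      obtain \<zeta> where \<zeta>: "\<zeta> ^ \<nu> = 1" "z = sg \<zeta> (zP P)"
        using conjugate[OF ac Pmi(2)[OF P] sP[OF P] zPin[OF P] z] by blast
      have z0: "\<zeta> \<noteq> 0" using unity_nz[of \<zeta> \<nu>] \<zeta>(1) nu by blast
      have "f z = poly (map_poly (sg \<zeta>) (subst_pow \<nu> F)) (sg \<zeta> (zP P))"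
        using sg_sp[OF \<zeta>(1) nu, of F] by (simp add: f_def \<zeta>(2))
      also have "\<dots> = sg \<zeta> (f (zP P))" unfolding f_def by (rule poly_sg[OF z0])
      finally show ?thesis using z0 by blast
    qed
    have Bc: "Bw z = Bw (zP P) \<and> f z $$ 0 = f (zP P) $$ 0 \<and>
        fls_subdegree (f z - fls_const l) = fls_subdegree (f (zP P) - fls_const l)"
      if P: "P \<in># Ps" and z: "z \<in># RT P" for P z l
    proof -
      obtain \<zeta> where \<zeta>: "\<zeta> \<noteq> 0" "f z = sg \<zeta> (f (zP P))" using conjf[OF P z] by blast
      have "f z - fls_const l = sg \<zeta> (f (zP P) - fls_const l)"
        using \<zeta> rhom.f_diff[OF sg_rhom[OF \<zeta>(1)]] by simp
      then show ?thesis using \<zeta> by (simp add: Bw_def sg_sd sg_nth0)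
    qed
    define cP where "cP P = f (zP P) $$ 0" for P
    define BP where "BP P = Bw (zP P)" for P
    have intP: "intm P (F - [:fls_const l:]) =
        ereal (real_of_int (int (degree P) * fls_subdegree (f (zP P) - fls_const l)) / real \<nu>)"
      if P: "P \<in># Ps" for P l
    proof -
      have nzl: "\<forall>z\<in>#RT P. poly (subst_pow \<nu> (F - [:fls_const l:])) z \<noteq> 0"
        using fnc memW[OF P] by (simp add: spFc)
      have "intm P (F - [:fls_const l:]) = ereal (real (degree (F - [:fls_const l:])) * real_of_int (fls_subdegree (lead_coeff P))
         + real_of_int (\<Sum>z\<in>#RT P. fls_subdegree (poly (subst_pow \<nu> (F - [:fls_const l:])) z)) / real \<nu>)"
        by (rule intm_fin[OF ac Pmi(4)[OF P] Fc0 sP[OF P] nzl])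
      also have "(\<Sum>z\<in>#RT P. fls_subdegree (poly (subst_pow \<nu> (F - [:fls_const l:])) z)) =
          int (size (RT P)) * fls_subdegree (f (zP P) - fls_const l)"
        by (rule sum_const_on) (use Bc[OF P] in \<open>simp add: spFc\<close>)
      also have "size (RT P) = degree P" by (rule spl_size[OF sP[OF P] Pmi(4)[OF P]])
      finally show ?thesis using Pmi(1)[OF P] by simp
    qed
    have g0: "f (zP P) \<noteq> 0" if P: "P \<in># Ps" for P using f0 memW[OF P zPin[OF P]] by blast
    have gnc: "f (zP P) \<noteq> fls_const l" if P: "P \<in># Ps" for P l using fnc memW[OF P zPin[OF P]] by blast
    have resP: "res P F = (if 0 \<le> BP P then Some (cP P) else None)" if P: "P \<in># Ps" for P
    proof -
      have dpos: "0 < degree P" by (rule Pmi(3)[OF P])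
      have iF: "intm P F = ereal (real_of_int (int (degree P) * BP P) / real \<nu>)"
        using intP[OF P, of 0] by (simp add: BP_def Bw_def)
      have ge: "(0 \<le> intm P F) \<longleftrightarrow> 0 \<le> BP P"
        using iF dpos nu by (simp add: zero_le_divide_iff zero_le_mult_iff)
      show ?thesis
      proof (cases "0 \<le> BP P")
        case True
        have pos: "0 < intm P (F - [:fls_const l:]) \<longleftrightarrow> l = cP P" for l
        proof -
          have "0 < intm P (F - [:fls_const l:]) \<longleftrightarrow> 0 < fls_subdegree (f (zP P) - fls_const l)"
            using intP[OF P, of l] dpos nu by (simp add: zero_less_divide_iff zero_less_mult_iff)
          also have "\<dots> \<longleftrightarrow> l = cP P" unfolding cP_def
            by (rule sd_pos_const[OF g0[OF P] _ gnc[OF P]]) (use True in \<open>simp add: BP_def Bw_def\<close>)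
          finally show ?thesis .
        qed
        have "(THE l. 0 < intm P (F - [:fls_const l:])) = cP P"
          by (rule the_equality) (simp_all add: pos)
        then show ?thesis using True ge by (simp add: res_def)
      next
        case False then show ?thesis using ge by (simp add: res_def)
      qed
    qed
    have resl: "(res P F = Some l \<and> l \<noteq> 0) \<longleftrightarrow> (BP P = 0 \<and> cP P = l)" if P: "P \<in># Ps" for P l
    proof
      assume H: "res P F = Some l \<and> l \<noteq> 0"
      then have B0: "0 \<le> BP P" and cl: "cP P = l" using resP[OF P] by (auto split: if_splits)
      have "\<not> 0 < BP P"
      proof
        assume "0 < BP P"
        then have "cP P = 0" unfolding cP_def BP_def Bw_def by (intro fls_eq0_below_subdegree) simp
        then show False using cl H by simp
      qed
      then show "BP P = 0 \<and> cP P = l" using B0 cl by simp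
    next
      assume H: "BP P = 0 \<and> cP P = l"
      have "cP P \<noteq> 0" using nth_fls_subdegree_nonzero[OF g0[OF P]] H by (simp add: cP_def BP_def Bw_def)
      then show "res P F = Some l \<and> l \<noteq> 0" using H resP[OF P] by simp
    qed
    define \<psi> where "\<psi> P = intm P (F - [:fls_const (cP P):])" for P
    have betalam: "beta_lam l D F = sum_mset (image_mset \<psi> (filter_mset (\<lambda>P. res P F = Some l) Ps))"
      if l0: "l \<noteq> 0" for l
      unfolding beta_lam_def alpha_lam_def Ps_def[symmetric]
    proof (rule arg_cong[where f=sum_mset], rule image_mset_cong)
      fix P assume "P \<in># filter_mset (\<lambda>P. res P F = Some l) Ps"
      then have P: "P \<in># Ps" and r: "res P F = Some l" by auto
      then have "cP P = l" using resl[OF P, of l] l0 by simp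
      then show "intm P (F - [:fls_const l:]) = \<psi> P" by (simp add: \<psi>_def)
    qed
    define S where "S = alpha D F - {0}"
    have Ssub: "S \<subseteq> cP ` set_mset Ps"
    proof
      fix l assume "l \<in> S"
      then have l0: "l \<noteq> 0" and ne: "filter_mset (\<lambda>P. res P F = Some l) Ps \<noteq> {#}"
        by (auto simp: S_def alpha_def alpha_lam_def Ps_def)
      then obtain P where "P \<in># filter_mset (\<lambda>P. res P F = Some l) Ps" by blast
      then have P: "P \<in># Ps" "res P F = Some l" by auto
      then have "cP P = l" using resl[OF P(1), of l] l0 by simp
      then show "l \<in> cP ` set_mset Ps" using P by blast
    qed
    have finS: "finite S" by (rule finite_subset[OF Ssub]) simp
    have filt: "filter_mset (\<lambda>P. \<exists>l\<in>S. res P F = Some l) Ps = filter_mset (\<lambda>P. BP P = 0) Ps"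
    proof (rule filter_mset_cong[OF refl])
      fix P assume P: "P \<in># Ps"
      show "(\<exists>l\<in>S. res P F = Some l) \<longleftrightarrow> BP P = 0"
      proof
        assume "\<exists>l\<in>S. res P F = Some l"
        then obtain l where "l \<in> S" "res P F = Some l" by blast
        then show "BP P = 0" using resl[OF P, of l] by (simp add: S_def)
      next
        assume B: "BP P = 0"
        then have r: "res P F = Some (cP P)" and c0': "cP P \<noteq> 0" using resl[OF P, of "cP P"] by auto
        have "P \<in># filter_mset (\<lambda>P. res P F = Some (cP P)) Ps" using P r by simp
        then have "cP P \<in> alpha D F" unfolding alpha_def alpha_lam_def Ps_def[symmetric] by auto
        then show "\<exists>l\<in>S. res P F = Some l" using r c0' by (auto simp: S_def)
      qed
    qed
    have psiP: "\<psi> P = ereal (real_of_int (int (degree P) * Aw (zP P)) / real \<nu>)" if P: "P \<in># Ps" for P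
      using intP[OF P, of "cP P"] by (simp add: \<psi>_def Aw_def cP_def)
    have SCeq: "SC = (\<Sum>P\<in>#filter_mset (\<lambda>P. BP P = 0) Ps. int (degree P) * Aw (zP P))"
    proof -
      have "SC = (\<Sum>P\<in>#Ps. \<Sum>z\<in>#RT P. if Bw z = 0 then Aw z else 0)"
        by (simp add: SC_def W_def sum_sum_mset)
      also have "\<dots> = (\<Sum>P\<in>#Ps. if BP P = 0 then int (degree P) * Aw (zP P) else 0)"
      proof (rule arg_cong[where f=sum_mset], rule image_mset_cong)
        fix P assume P: "P \<in># Ps"
        have "(\<Sum>z\<in>#RT P. if Bw z = 0 then Aw z else 0) = int (size (RT P)) * (if BP P = 0 then Aw (zP P) else 0)"
          by (rule sum_const_on) (use Bc[OF P] in \<open>auto simp: BP_def Aw_def\<close>)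
        also have "size (RT P) = degree P" by (rule spl_size[OF sP[OF P] Pmi(4)[OF P]])
        finally show "(\<Sum>z\<in>#RT P. if Bw z = 0 then Aw z else 0) = (if BP P = 0 then int (degree P) * Aw (zP P) else 0)"
          by simp
      qed
      also have "\<dots> = (\<Sum>P\<in>#filter_mset (\<lambda>P. BP P = 0) Ps. int (degree P) * Aw (zP P))"
        by (rule sum_if_filter)
      finally show ?thesis .
    qed
    have "betabar F = (\<Sum>l\<in>S. beta_lam l D F)" by (simp add: betabar_def beta_def D_def S_def)
    also have "\<dots> = (\<Sum>l\<in>S. sum_mset (image_mset \<psi> (filter_mset (\<lambda>P. res P F = Some l) Ps)))"
      by (rule sum.cong) (simp_all add: betalam S_def)
    also have "\<dots> = sum_mset (image_mset \<psi> (filter_mset (\<lambda>P. \<exists>l\<in>S. res P F = Some l) Ps))"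
      by (rule regroup[OF finS])
    also have "\<dots> = (\<Sum>P\<in>#filter_mset (\<lambda>P. BP P = 0) Ps. ereal (real_of_int (int (degree P) * Aw (zP P)) / real \<nu>))"
      unfolding filt by (rule arg_cong[where f=sum_mset], rule image_mset_cong) (simp add: psiP)
    also have "\<dots> = ereal (real_of_int SC / real \<nu>)" by (simp only: ereal_sum_div SCeq)
    finally show ?thesis .
  qed
  obtain a where a: "SX = int \<nu> * a" using dvX by (elim dvdE)
  obtain b where b: "SB = int \<nu> * b" using dvB by (elim dvdE)
  define c where "c = a - b + int N - 1"
  have SCc: "SC = int \<nu> * c" using SXeq a b by (simp add: c_def algebra_simps)
  have r: "real_of_int (int \<nu> * k) / real \<nu> = real_of_int k" for k using nu by simp
  show ?thesis
  proof (rule exI[of _ a], rule exI[of _ b], rule exI[of _ c], intro conjI)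
    show "intm (map_poly fls_deriv F) (pderiv F) = ereal (real_of_int a)"
      using intFxD nu by (simp add: Fx_def D_def a)
    show "intm F (pderiv F) = ereal (real_of_int b)"
      using intFD intDF nu by (simp add: D_def b)
    show "betabar F = ereal (real_of_int c)" using betaeq nu by (simp add: SCc)
    show "a = b - int (degree F) + 1 + c" by (simp add: c_def N_def)
  qed
qed



end
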